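(* Let $f:\mathbb{R}\to(0,\infty)$ be $C^4$, unimodal with maximum at $0$, of the form $f=e^{-H}$ with $H$ regularly varying (there is $\alpha>0$ with $H(tx)/H(t)\to x^\alpha$ as $|t|\to\infty$ for all $x>0$), and with $|(\log f)''''|<M$ for some $M>0$. Suppose there exists $\gamma>0$ such that $|\mathrm{Var}_{g_\beta}(Y^2)-2|=\mathcal{O}(\beta^{-\gamma})$ as $\beta\to\infty$, where $g_\beta(y)\propto f^\beta\big(y/\sqrt{-\beta h''(0)}\big)$ is a probability density. Then, as $\beta\to\infty$, $$\tfrac12V(\beta)-I(\beta)=\mathcal{O}(\beta^{-k}),$$ where in general $k=\min\{2+\gamma,5/2\}$, but if $h'''(0)=0$ then $k=\min\{2+\gamma,3\}$.
   Context: $h=\log f$, $k(x)=xh'(x)$; $\mathrm{Var}_\beta,\mathrm{Cov}_\beta$ are moments under $f^\beta/\int f^\beta$. $I(\beta)=\mathrm{Var}_\beta(h(X))$ and $V(\beta)=\mathrm{Cov}_\beta(h(X),k(X))$. *)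

theory Defs
  imports "HOL-Analysis.Analysis" "HOL-Library.Landau_Symbols"
begin

definition wmean :: "(real \<Rightarrow> real) \<Rightarrow> (real \<Rightarrow> real) \<Rightarrow> real" where
  "wmean w \<phi> = (\<integral>x. \<phi> x * w x \<partial>lborel) / (\<integral>x. w x \<partial>lborel)"

definition wvar :: "(real \<Rightarrow> real) \<Rightarrow> (real \<Rightarrow> real) \<Rightarrow> real" where
  "wvar w \<phi> = wmean w (\<lambda>x. (\<phi> x)^2) - (wmean w \<phi>)^2"

definition wcov :: "(real \<Rightarrow> real) \<Rightarrow> (real \<Rightarrow> real) \<Rightarrow> (real \<Rightarrow> real) \<Rightarrow> real" where
  "wcov w \<phi> \<psi> = wmean w (\<lambda>x. \<phi> x * \<psi> x) - wmean w \<phi> * wmean w \<psi>"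

definition hfun :: "(real \<Rightarrow> real) \<Rightarrow> real \<Rightarrow> real" where
  "hfun f = (\<lambda>x. ln (f x))"

definition kfun :: "(real \<Rightarrow> real) \<Rightarrow> real \<Rightarrow> real" where
  "kfun f = (\<lambda>x. x * deriv (hfun f) x)"

definition tilt :: "(real \<Rightarrow> real) \<Rightarrow> real \<Rightarrow> real \<Rightarrow> real" where
  "tilt f \<beta> = (\<lambda>x. f x powr \<beta>)"

definition Ifun :: "(real \<Rightarrow> real) \<Rightarrow> real \<Rightarrow> real" where
  "Ifun f \<beta> = wvar (tilt f \<beta>) (hfun f)"

definition Vfun :: "(real \<Rightarrow> real) \<Rightarrow> real \<Rightarrow> real" where
  "Vfun f \<beta> = wcov (tilt f \<beta>) (hfun f) (kfun f)"

definition gdens :: "(real \<Rightarrow> real) \<Rightarrow> real \<Rightarrow> real \<Rightarrow> real" where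
  "gdens f \<beta> = (\<lambda>y. f (y / sqrt (- \<beta> * (deriv ^^ 2) (hfun f) 0)) powr \<beta>)"

end

theory Submission
  imports Defs "HOL-Probability.Distributions" "HOL-Probability.Sinc_Integral" "HOL-Real_Asymp.Real_Asymp"
begin

locale L0 =
  fixes f :: "real \<Rightarrow> real" and M :: real
  assumes pos: "\<And>x. f x > 0"
    and C4_deriv: "\<And>n x. n < 4 \<Longrightarrow> ((deriv ^^ n) f has_real_derivative (deriv ^^ Suc n) f x) (at x)"
    and h4_bound: "\<And>x. \<bar>(deriv ^^ 4) (hfun f) x\<bar> < M"
    and unimodal_left: "\<And>x y. x \<le> y \<Longrightarrow> y \<le> 0 \<Longrightarrow> f x \<le> f y"
    and unimodal_right: "\<And>x y. 0 \<le> x \<Longrightarrow> x \<le> y \<Longrightarrow> f y \<le> f x"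
begin

definition "f1 = deriv f"
definition "f2 = deriv f1"
definition "f3 = deriv f2"
definition "f4 = deriv f3"

lemma F_eqs: "(deriv^^1) f = f1" "(deriv^^2) f = f2" "(deriv^^3) f = f3" "(deriv^^4) f = f4"
  by (simp_all add: f1_def f2_def f3_def f4_def eval_nat_numeral)

lemma df0: "(f has_real_derivative f1 x) (at x)" using C4_deriv[of 0 x] F_eqs by simp
lemma df1: "(f1 has_real_derivative f2 x) (at x)" using C4_deriv[of 1 x] F_eqs by (simp add: f2_def)
lemma df2: "(f2 has_real_derivative f3 x) (at x)" using C4_deriv[of 2 x] F_eqs
  by (simp add: eval_nat_numeral)
lemma df3: "(f3 has_real_derivative f4 x) (at x)" using C4_deriv[of 3 x] F_eqs
  by (simp add: eval_nat_numeral)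

definition "H1 x = f1 x / f x"
definition "H2 x = f2 x / f x - (f1 x / f x)^2"
definition "H3 x = f3 x / f x - 3 * f1 x * f2 x / f x^2 + 2 * (f1 x / f x)^3"
definition "H4 x = f4 x / f x - 4 * f1 x * f3 x / f x^2 - 3 * (f2 x)^2 / f x^2
   + 12 * f1 x^2 * f2 x / f x^3 - 6 * (f1 x / f x)^4"

lemma dh0: "(hfun f has_real_derivative H1 x) (at x)"
  unfolding hfun_def H1_def
  using pos[of x] by (auto intro!: derivative_eq_intros df0 simp: field_simps)

lemma dh1: "(H1 has_real_derivative H2 x) (at x)"
  unfolding H1_def[abs_def] H2_def
  using pos[of x] by (auto intro!: derivative_eq_intros df0 df1 simp: field_simps power2_eq_square)

lemma dh2: "(H2 has_real_derivative H3 x) (at x)"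
  unfolding H2_def[abs_def] H3_def
  using pos[of x] by (auto intro!: derivative_eq_intros df0 df1 df2 simp: field_simps power2_eq_square power3_eq_cube)

lemma dh3: "(H3 has_real_derivative H4 x) (at x)"
  unfolding H3_def[abs_def] H4_def
  using pos[of x] by (auto intro!: derivative_eq_intros df0 df1 df2 df3 simp: field_simps power2_eq_square power3_eq_cube eval_nat_numeral)


lemma hd1: "deriv (hfun f) = H1" by (rule ext, rule DERIV_imp_deriv[OF dh0])
lemma hd2: "deriv H1 = H2" by (rule ext, rule DERIV_imp_deriv[OF dh1])
lemma hd3: "deriv H2 = H3" by (rule ext, rule DERIV_imp_deriv[OF dh2])
lemma hd4: "deriv H3 = H4" by (rule ext, rule DERIV_imp_deriv[OF dh3])

lemma hds: "(deriv^^1) (hfun f) = H1" "(deriv^^2) (hfun f) = H2"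
  "(deriv^^3) (hfun f) = H3" "(deriv^^4) (hfun f) = H4"
  by (simp_all add: eval_nat_numeral hd1 hd2 hd3 hd4)

lemma H4_bound: "\<bar>H4 x\<bar> < M" using h4_bound[of x] hds by simp

lemma hder: "m < 4 \<Longrightarrow> ((deriv^^m) (hfun f) has_real_derivative (deriv^^Suc m) (hfun f) x) (at x)"
proof -
  assume "m < 4"
  then have "m = 0 \<or> m = 1 \<or> m = 2 \<or> m = 3" by auto
  then show ?thesis
  proof (elim disjE)
    assume "m = 0" then show ?thesis using dh0 hds by simp
  next
    assume "m = 1" then show ?thesis using dh1 hds hd2 by simp
  next
    assume "m = 2" then show ?thesis using dh2 hds by (simp add: eval_nat_numeral)
  next
    assume "m = 3" then show ?thesis using dh3 hds by (simp add: eval_nat_numeral)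
  qed
qed

lemma h_le0: "hfun f x \<le> hfun f 0"
proof -
  have "f x \<le> f 0"
    by (cases "x \<le> 0") (auto intro: unimodal_left unimodal_right)
  then show ?thesis using pos[of x] by (simp add: hfun_def)
qed

lemma H1_0: "H1 0 = 0"
  by (rule DERIV_local_max[OF dh0, of 1]) (auto simp: h_le0)

lemma taylor_h: "\<exists>t. hfun f x = hfun f 0 + H2 0 / 2 * x^2 + H3 0 / 6 * x^3 + H4 t / 24 * x^4"
proof -
  have "\<exists>t. \<bar>t\<bar> \<le> \<bar>x\<bar> \<and> hfun f x = (\<Sum>m<4. (deriv^^m) (hfun f) 0 / (fact m) * x ^ m)
     + (deriv^^4) (hfun f) t / (fact 4) * x ^ 4"
    by (rule Maclaurin_bi_le) (simp, blast intro: hder)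
  then obtain t where "hfun f x = (\<Sum>m<4. (deriv^^m) (hfun f) 0 / (fact m) * x ^ m)
     + (deriv^^4) (hfun f) t / (fact 4) * x ^ 4" by blast
  then have "hfun f x = hfun f 0 + H2 0 / 2 * x^2 + H3 0 / 6 * x^3 + H4 t / 24 * x^4"
    by (simp add: eval_nat_numeral hd1 hd2 hd3 hd4 H1_0 fact_numeral)
  then show ?thesis by blast
qed

lemma taylor_h1: "\<exists>t. H1 x = H2 0 * x + H3 0 / 2 * x^2 + H4 t / 6 * x^3"
proof -
  have "\<exists>t. \<bar>t\<bar> \<le> \<bar>x\<bar> \<and> H1 x = (\<Sum>m<3. (\<lambda>m. (deriv^^(Suc m)) (hfun f)) m 0 / (fact m) * x ^ m)
     + (\<lambda>m. (deriv^^(Suc m)) (hfun f)) 3 t / (fact 3) * x ^ 3"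
  proof (rule Maclaurin_bi_le)
    show "(\<lambda>m. (deriv ^^ Suc m) (hfun f)) 0 = H1" using hds by simp
    show "\<forall>m t. m < 3 \<and> \<bar>t\<bar> \<le> \<bar>x\<bar> \<longrightarrow> ((\<lambda>m. (deriv ^^ Suc m) (hfun f)) m has_real_derivative (\<lambda>m. (deriv ^^ Suc m) (hfun f)) (Suc m) t) (at t)"
      using hder[of "Suc _"] by simp
  qed
  then obtain t where "H1 x = (\<Sum>m<3. (\<lambda>m. (deriv^^(Suc m)) (hfun f)) m 0 / (fact m) * x ^ m)
     + (\<lambda>m. (deriv^^(Suc m)) (hfun f)) 3 t / (fact 3) * x ^ 3" by blast
  then have "H1 x = H2 0 * x + H3 0 / 2 * x^2 + H4 t / 6 * x^3"
    using hds by (simp add: eval_nat_numeral H1_0 fact_numeral)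
  then show ?thesis by blast
qed

lemma Mpos: "M > 0" using H4_bound[of 0] by linarith

lemma U_expand: "\<exists>t. hfun f x - hfun f 0 = H2 0 / 2 * x^2 + H3 0 / 6 * x^3 + H4 t / 24 * x^4"
  using taylor_h[of x] by (auto simp: algebra_simps)

lemma U_bound: "\<bar>hfun f x - hfun f 0 - H2 0 / 2 * x^2 - H3 0 / 6 * x^3\<bar> \<le> M / 24 * x^4"
proof -
  obtain t where t: "hfun f x - hfun f 0 = H2 0 / 2 * x^2 + H3 0 / 6 * x^3 + H4 t / 24 * x^4"
    using U_expand by blast
  have "\<bar>H4 t / 24 * x^4\<bar> \<le> M / 24 * x^4"
    using H4_bound[of t] by (simp add: abs_mult mult_right_mono)
  then show ?thesis using t by simp
qed

lemma D_bound: "\<bar>x * H1 x / 2 - (hfun f x - hfun f 0) - H3 0 / 12 * x^3\<bar> \<le> M / 8 * x^4"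
proof -
  obtain t where t: "hfun f x - hfun f 0 = H2 0 / 2 * x^2 + H3 0 / 6 * x^3 + H4 t / 24 * x^4"
    using U_expand by blast
  obtain s where s: "H1 x = H2 0 * x + H3 0 / 2 * x^2 + H4 s / 6 * x^3"
    using taylor_h1 by blast
  have e: "x * H1 x / 2 - (hfun f x - hfun f 0) - H3 0 / 12 * x^3 = (H4 s / 12 - H4 t / 24) * x^4"
    unfolding s t by (simp add: algebra_simps power2_eq_square power3_eq_cube eval_nat_numeral)
  have "\<bar>H4 s / 12 - H4 t / 24\<bar> \<le> M / 8"
    using H4_bound[of s] H4_bound[of t] unfolding abs_le_iff abs_less_iff by linarith
  then have "\<bar>H4 s / 12 - H4 t / 24\<bar> * x^4 \<le> M / 8 * x^4"
    by (rule mult_right_mono) simp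
  then have "\<bar>(H4 s / 12 - H4 t / 24) * x^4\<bar> \<le> M / 8 * x^4"
    by (simp add: abs_mult)
  then show ?thesis using e by simp
qed

lemma a_le0: "H2 0 \<le> 0"
proof (rule ccontr)
  assume "\<not> H2 0 \<le> 0"
  then have ap: "H2 0 > 0" by simp
  define e where "e = min 1 (H2 0 / (\<bar>H3 0\<bar> + M))"
  have Mp: "M > 0" by (rule Mpos)
  have e0: "e > 0" using ap Mp by (simp add: e_def add_pos_nonneg)
  have e1: "e \<le> 1" by (simp add: e_def)
  have e2: "e * (\<bar>H3 0\<bar> + M) \<le> H2 0"
  proof -
    have p: "\<bar>H3 0\<bar> + M > 0" using Mp by simp
    have "e \<le> H2 0 / (\<bar>H3 0\<bar> + M)" by (simp add: e_def)
    then show ?thesis using p by (simp add: pos_le_divide_eq)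
  qed
  obtain t where t: "hfun f e - hfun f 0 = H2 0 / 2 * e^2 + H3 0 / 6 * e^3 + H4 t / 24 * e^4"
    using U_expand by blast
  have "H3 0 / 6 * e^3 \<ge> - (\<bar>H3 0\<bar> * e) / 6 * e^2"
    using e0 by (simp add: power2_eq_square power3_eq_cube abs_if mult_mono)
  moreover have "H4 t / 24 * e^4 \<ge> - (M * e) / 6 * e^2"
  proof -
    have "H4 t \<ge> - M" using H4_bound[of t] by simp
    moreover have "e^4 \<le> e^3" using e0 e1 by (simp add: power_decreasing)
    ultimately have "H4 t * e^4 \<ge> - M * e^3"
    proof -
      have "H4 t * e^4 \<ge> - M * e^4" using mult_right_mono[OF \<open>H4 t \<ge> - M\<close>, of "e^4"] by simp
      moreover have "- M * e^4 \<ge> - M * e^3" using \<open>e^4 \<le> e^3\<close> Mp by simp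
      ultimately show ?thesis by linarith
    qed
    then have "H4 t / 24 * e^4 \<ge> - M * e^3 / 24" by simp
    moreover have "M * e^3 \<ge> 0" using Mp e0 by simp
    moreover have "e^3 = e * e^2" by (simp add: power2_eq_square power3_eq_cube)
    ultimately show ?thesis by simp
  qed
  moreover have "(H2 0 / 2 - e * (\<bar>H3 0\<bar> + M) / 6) * e^2 = H2 0 / 2 * e^2 + (- (\<bar>H3 0\<bar> * e) / 6 * e^2) + (- (M * e) / 6 * e^2)"
    by (simp add: algebra_simps)
  ultimately have "hfun f e - hfun f 0 \<ge> (H2 0 / 2 - e * (\<bar>H3 0\<bar> + M) / 6) * e^2"
    using t by linarith
  moreover have "H2 0 / 2 - e * (\<bar>H3 0\<bar> + M) / 6 > 0" using e2 ap by simp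
  ultimately have "hfun f e - hfun f 0 > 0" using e0
    by (smt (verit) mult_pos_pos zero_less_power)
  then show False using h_le0[of e] by simp
qed

end

lemma exp_ge_pow: assumes "x \<ge> 0" "N > 0" shows "(x / real N) ^ N \<le> exp x"
proof -
  have "x / real N \<le> exp (x / real N)"
    using exp_ge_add_one_self[of "x / real N"] by linarith
  then have "(x / real N) ^ N \<le> exp (x / real N) ^ N"
    using assms by (intro power_mono) auto
  also have "\<dots> = exp (real N * (x / real N))" by (rule exp_of_nat_mult[symmetric])
  also have "\<dots> = exp x" using assms by simp
  finally show ?thesis .
qed

lemma geo_exp_bound:
  fixes q r c :: real
  assumes "q \<ge> 1" "r > 1" "c > 0"
  obtains B where "\<And>n. q ^ n * exp (- c * r ^ n) \<le> B"
proof -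
  obtain N where N: "q < r ^ N" using real_arch_pow[OF assms(2)] by blast
  define N' where "N' = Suc N"
  have N'pos: "N' > 0" by (simp add: N'_def)
  have qN': "q \<le> r ^ N'"
  proof -
    have "r ^ N \<le> r ^ N'" using assms(2) by (intro power_increasing) (auto simp: N'_def)
    then show ?thesis using N by linarith
  qed
  have "q ^ n * exp (- c * r ^ n) \<le> (real N' / c) ^ N'" for n
  proof -
    have rn: "r ^ n > 0" using assms by simp
    have "(c * r ^ n / real N') ^ N' \<le> exp (c * r ^ n)"
      using exp_ge_pow[of "c * r ^ n" N'] assms rn N'pos by simp
    then have e: "exp (- c * r ^ n) \<le> 1 / (c * r ^ n / real N') ^ N'"
      using assms rn N'pos by (simp add: exp_minus field_simps)
    have "q ^ n * exp (- c * r ^ n) \<le> q ^ n * (1 / (c * r ^ n / real N') ^ N')"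
      using e assms by (intro mult_left_mono) auto
    also have "\<dots> = (real N' / c) ^ N' * (q ^ n / (r ^ N') ^ n)"
      using assms rn N'pos by (simp add: field_simps power_mult_distrib power_divide flip: power_mult)
    also have "\<dots> \<le> (real N' / c) ^ N' * 1"
    proof -
      have "q ^ n \<le> (r ^ N') ^ n" using qN' assms by (intro power_mono) auto
      then have "q ^ n / (r ^ N') ^ n \<le> 1" using assms by (simp add: divide_le_eq_1)
      then show ?thesis using assms by (intro mult_left_mono) auto
    qed
    finally show ?thesis by simp
  qed
  then show ?thesis using that by blast
qed

lemma integrable_inv_sq: "integrable lborel (\<lambda>x::real. inverse (1 + x^2))"
proof -
  have "einterval (-\<infinity>) \<infinity> = (UNIV :: real set)" by (auto simp: einterval_def)
  then show ?thesis using integrable_inverse_1_plus_square by (simp add: set_integrable_def)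
qed

lemma tail_integrable:
  fixes f H :: "real \<Rightarrow> real"
  assumes pos: "\<And>x. f x > 0" and cont: "continuous_on UNIV f"
    and unimodal_left: "\<And>x y. x \<le> y \<Longrightarrow> y \<le> 0 \<Longrightarrow> f x \<le> f y"
    and unimodal_right: "\<And>x y. 0 \<le> x \<Longrightarrow> x \<le> y \<Longrightarrow> f y \<le> f x"
    and fH: "\<And>x. f x = exp (- H x)"
    and regvar: "\<exists>\<alpha>>0. \<forall>x>0. ((\<lambda>t. H (t * x) / H t) \<longlongrightarrow> x powr \<alpha>) at_infinity"
  shows "integrable lborel (\<lambda>x. \<bar>x\<bar>^m * f x)"
proof -
  obtain \<alpha> where \<alpha>: "\<alpha> > 0" and lim: "\<forall>x>0. ((\<lambda>t. H (t * x) / H t) \<longlongrightarrow> x powr \<alpha>) at_infinity"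
    using regvar by blast
  have lim2: "((\<lambda>t. H (t * 2) / H t) \<longlongrightarrow> 2 powr \<alpha>) at_infinity" using lim by simp
  define r where "r = (1 + 2 powr \<alpha>) / 2"
  have p1: "2 powr \<alpha> > 1" using \<alpha> by (simp add: gr_one_powr)
  have r1: "r > 1" and r2: "r < 2 powr \<alpha>" using p1 by (auto simp: r_def)
  have "eventually (\<lambda>t. H (t * 2) / H t > r) at_infinity"
    using order_tendstoD(1)[OF lim2 r2] .
  then obtain T0 where T0: "\<And>t. T0 \<le> norm t \<Longrightarrow> H (t * 2) / H t > r"
    unfolding eventually_at_infinity by blast
  define T where "T = max T0 1"
  have T1: "T \<ge> 1" by (simp add: T_def)
  have Hmono1: "H x \<le> H y" if "0 \<le> x" "x \<le> y" for x y
    using unimodal_right[OF that] by (simp add: fH)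
  have Hmono2: "H x \<le> H y" if "y \<le> x" "x \<le> 0" for x y
    using unimodal_left[OF that] by (simp add: fH)
  have key: "H t > 0 \<and> H (t * 2) > r * H t" if "T \<le> \<bar>t\<bar>" for t
  proof -
    have rat: "H (t * 2) / H t > r" using T0[of t] that by (simp add: T_def)
    have mono: "H t \<le> H (t * 2)"
    proof (cases "t \<ge> 0")
      case True then show ?thesis by (intro Hmono1) auto
    next
      case False then show ?thesis by (intro Hmono2) auto
    qed
    have "H t \<noteq> 0" using rat r1 by auto
    moreover have "\<not> H t < 0"
    proof
      assume n: "H t < 0"
      then have "H (t * 2) < r * H t" using rat by (simp add: neg_less_divide_eq mult.commute)
      moreover have "r * H t < H t" using n r1 by (simp add: mult_less_cancel_right1)
      ultimately show False using mono by simp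
    qed
    ultimately have hp: "H t > 0" by simp
    then have "H (t * 2) > r * H t" using rat by (simp add: pos_less_divide_eq mult.commute)
    then show ?thesis using hp by simp
  qed
  define c0 where "c0 = min (H T) (H (-T))"
  have c0: "c0 > 0" using key[of T] key[of "-T"] T1 by (simp add: c0_def)
  have grow: "H x \<ge> r ^ j * c0" if "2 ^ j * T \<le> \<bar>x\<bar>" for j x
    using that
  proof (induction j arbitrary: x)
    case 0
    then have "T \<le> \<bar>x\<bar>" by simp
    show ?case
    proof (cases "x \<ge> 0")
      case True
      then have "H T \<le> H x" using \<open>T \<le> \<bar>x\<bar>\<close> T1 by (intro Hmono1) auto
      then show ?thesis by (simp add: c0_def)
    next
      case False
      then have "H (-T) \<le> H x" using \<open>T \<le> \<bar>x\<bar>\<close> T1 by (intro Hmono2) auto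
      then show ?thesis by (simp add: c0_def)
    qed
  next
    case (Suc j)
    have a: "2 ^ j * T \<le> \<bar>x / 2\<bar>" using Suc.prems by simp
    then have IH: "H (x / 2) \<ge> r ^ j * c0" using Suc.IH by blast
    have "(1::real) \<le> 2 ^ j" by simp
    then have "1 * T \<le> 2 ^ j * T" using T1 by (intro mult_right_mono) auto
    then have "T \<le> \<bar>x / 2\<bar>" using a by simp
    then have "H (x / 2 * 2) > r * H (x / 2)" using key by blast
    moreover have "r * H (x / 2) \<ge> r * (r ^ j * c0)" using IH r1 by simp
    ultimately show ?case by simp
  qed
  define q :: real where "q = 2 ^ (m + 2)"
  have q1: "q \<ge> 1" unfolding q_def by (rule one_le_power) simp
  obtain B where B: "\<And>n. q ^ n * exp (- c0 * r ^ n) \<le> B"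
    using geo_exp_bound[OF q1 r1 c0] by blast
  define C where "C = max ((1 + T^2) * T^m * f 0) (2 * (2 * T) ^ (m + 2) * B)"
  have f0: "f x \<le> f 0" for x
    by (cases "x \<le> 0") (auto intro: unimodal_left unimodal_right)
  have bnd_n: "\<forall>x. \<bar>x\<bar> < 2 ^ n * T \<longrightarrow> (1 + x^2) * \<bar>x\<bar>^m * f x \<le> C" for n
  proof (induction n)
    case 0
    show ?case
    proof (intro allI impI)
      fix x :: real assume "\<bar>x\<bar> < 2 ^ 0 * T"
      then have xT: "\<bar>x\<bar> \<le> T" by simp
      have "x^2 \<le> T^2" using xT by (metis abs_le_square_iff abs_of_nonneg T1 order_trans zero_le_one)
      then have "1 + x^2 \<le> 1 + T^2" by simp
      moreover have "\<bar>x\<bar>^m \<le> T^m" using xT by (intro power_mono) auto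
      ultimately have "(1 + x^2) * \<bar>x\<bar>^m \<le> (1 + T^2) * T^m"
        by (intro mult_mono) auto
      moreover have "f x \<le> f 0" by (rule f0)
      ultimately have "(1 + x^2) * \<bar>x\<bar>^m * f x \<le> (1 + T^2) * T^m * f 0"
        using pos[of x] T1 by (rule_tac mult_mono) auto
      then show "(1 + x^2) * \<bar>x\<bar>^m * f x \<le> C" by (simp add: C_def)
    qed
  next
    case (Suc n)
    show ?case
    proof (intro allI impI)
      fix x :: real assume xl: "\<bar>x\<bar> < 2 ^ Suc n * T"
      show "(1 + x^2) * \<bar>x\<bar>^m * f x \<le> C"
      proof (cases "\<bar>x\<bar> < 2 ^ n * T")
        case True then show ?thesis using Suc.IH by blast
      next
        case False
        then have xg: "2 ^ n * T \<le> \<bar>x\<bar>" by simp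
        have "(1::real) \<le> 2 ^ n" by simp
        then have "1 * 1 \<le> 2 ^ n * T" using T1 by (intro mult_mono) auto
        then have x1: "1 \<le> \<bar>x\<bar>" using xg by simp
        have Hx: "H x \<ge> r ^ n * c0" using grow[OF xg] .
        have fx: "f x \<le> exp (- c0 * r ^ n)" using Hx by (simp add: fH mult.commute)
        have "1 * 1 \<le> \<bar>x\<bar> * \<bar>x\<bar>" using x1 by (intro mult_mono) auto
        then have "1 \<le> x^2" by (simp add: power2_eq_square)
        then have "(1 + x^2) * \<bar>x\<bar>^m \<le> (2 * x^2) * \<bar>x\<bar>^m" by (intro mult_right_mono) auto
        then have "(1 + x^2) * \<bar>x\<bar>^m \<le> 2 * (x^2 * \<bar>x\<bar>^m)" by simp
        also have "x^2 * \<bar>x\<bar>^m = \<bar>x\<bar>^(m+2)" by (simp add: power_add power2_eq_square)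
        also have "\<bar>x\<bar>^(m+2) \<le> (2 ^ Suc n * T) ^ (m + 2)" using xl by (intro power_mono) auto
        also have "(2 ^ Suc n * T) ^ (m + 2) = (2 * T) ^ (m + 2) * q ^ n"
        proof -
          have "(2 ^ Suc n * T) ^ (m + 2) = ((2 * T) * 2 ^ n) ^ (m + 2)" by (simp add: mult_ac)
          also have "\<dots> = (2 * T) ^ (m + 2) * (2 ^ n) ^ (m + 2)" by (rule power_mult_distrib)
          also have "(2 ^ n) ^ (m + 2) = (q::real) ^ n"
            unfolding q_def by (metis power_mult mult.commute)
          finally show ?thesis .
        qed
        finally have P: "(1 + x^2) * \<bar>x\<bar>^m \<le> 2 * ((2 * T) ^ (m + 2) * q ^ n)" by simp
        have "(1 + x^2) * \<bar>x\<bar>^m * f x \<le> 2 * ((2 * T) ^ (m + 2) * q ^ n) * exp (- c0 * r ^ n)"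
          by (rule mult_mono[OF P fx]) (use pos[of x] T1 q1 in auto)
        also have "\<dots> = 2 * (2 * T) ^ (m + 2) * (q ^ n * exp (- c0 * r ^ n))" by simp
        also have "\<dots> \<le> 2 * (2 * T) ^ (m + 2) * B" using B[of n] T1 by (intro mult_left_mono) auto
        finally show ?thesis by (simp add: C_def)
      qed
    qed
  qed
  have bnd: "(1 + x^2) * \<bar>x\<bar>^m * f x \<le> C" for x
  proof -
    obtain n where "\<bar>x\<bar> / T < 2 ^ n" using real_arch_pow[of 2 "\<bar>x\<bar> / T"] by auto
    then have "\<bar>x\<bar> < 2 ^ n * T" using T1 by (simp add: divide_less_eq)
    then show ?thesis using bnd_n by blast
  qed
  show ?thesis
  proof (rule Bochner_Integration.integrable_bound[where f="\<lambda>x. C * inverse (1 + x^2)"])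
    show "integrable lborel (\<lambda>x. C * inverse (1 + x^2))"
      by (intro integrable_mult_right integrable_inv_sq)
    show "(\<lambda>x. \<bar>x\<bar>^m * f x) \<in> borel_measurable lborel"
      using cont by (auto intro!: borel_measurable_continuous_onI continuous_intros)
    show "AE x in lborel. norm (\<bar>x\<bar>^m * f x) \<le> norm (C * inverse (1 + x^2))"
    proof (intro AE_I2)
      fix x :: real
      have p: "1 + x^2 > 0" by (simp add: add_pos_nonneg)
      have "\<bar>x\<bar>^m * f x \<le> C * inverse (1 + x^2)"
        using bnd[of x] p by (simp add: field_simps)
      moreover have "\<bar>x\<bar>^m * f x \<ge> 0" using pos[of x] by simp
      ultimately show "norm (\<bar>x\<bar>^m * f x) \<le> norm (C * inverse (1 + x^2))" by simp
    qed
  qed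
qed

lemma pow_le_2N: "(1 + y) ^ N \<le> 2 ^ N * (1 + y ^ N)" if "y \<ge> 0" for y :: real
proof (cases "y \<le> 1")
  case True
  have "(1 + y) ^ N \<le> 2 ^ N" using True that by (intro power_mono) auto
  also have "\<dots> \<le> 2 ^ N * (1 + y ^ N)" using that by simp
  finally show ?thesis .
next
  case False
  have "(1 + y) ^ N \<le> (2 * y) ^ N" using False that by (intro power_mono) auto
  also have "\<dots> = 2 ^ N * y ^ N" by (simp add: power_mult_distrib)
  also have "\<dots> \<le> 2 ^ N * (1 + y ^ N)" by simp
  finally show ?thesis .
qed

locale L1 = L0 +
  assumes a_neg: "H2 0 < 0"
    and tail: "\<And>m. integrable lborel (\<lambda>x. \<bar>x\<bar>^m * f x)"
begin

lemma cont_f: "continuous_on UNIV f"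
  using df0 by (intro continuous_at_imp_continuous_on) (auto intro: DERIV_isCont)
lemma cont_f1: "continuous_on UNIV f1"
  using df1 by (intro continuous_at_imp_continuous_on) (auto intro: DERIV_isCont)
lemma cont_h: "continuous_on UNIV (hfun f)"
  using dh0 by (intro continuous_at_imp_continuous_on) (auto intro: DERIV_isCont)
lemma cont_H1: "continuous_on UNIV H1"
  using dh1 by (intro continuous_at_imp_continuous_on) (auto intro: DERIV_isCont)

definition "h0 = hfun f 0"
definition "w \<beta> x = exp (\<beta> * (hfun f x - h0))"

lemma f_eq: "f x = exp (h0) * exp (hfun f x - h0)"
  using pos[of x] by (simp add: hfun_def h0_def flip: exp_add)

lemma w_pos: "w \<beta> x > 0" by (simp add: w_def)

lemma w_le: "\<beta> \<ge> 1 \<Longrightarrow> w \<beta> x \<le> f x / exp h0"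
proof -
  assume b: "\<beta> \<ge> 1"
  have n: "hfun f x - h0 \<le> 0" using h_le0 by (simp add: h0_def)
  have "\<beta> * (hfun f x - h0) \<le> 1 * (hfun f x - h0)"
    using b n by (intro mult_right_mono_neg) auto
  then have "w \<beta> x \<le> exp (hfun f x - h0)" by (simp add: w_def)
  also have "\<dots> = f x / exp h0" using f_eq[of x] by simp
  finally show ?thesis .
qed

lemma integrable_pow_f: "integrable lborel (\<lambda>x. (1 + \<bar>x\<bar>) ^ N * f x)"
proof (rule Bochner_Integration.integrable_bound[where f="\<lambda>x. 2 ^ N * (f x + \<bar>x\<bar>^N * f x)"])
  have "integrable lborel (\<lambda>x. \<bar>x\<bar>^0 * f x)" by (rule tail)
  then have "integrable lborel f" by simp
  then show "integrable lborel (\<lambda>x. 2 ^ N * (f x + \<bar>x\<bar>^N * f x))"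
    by (intro integrable_mult_right Bochner_Integration.integrable_add tail)
  show "(\<lambda>x. (1 + \<bar>x\<bar>) ^ N * f x) \<in> borel_measurable lborel"
    using cont_f by (auto intro!: borel_measurable_continuous_onI continuous_intros)
  show "AE x in lborel. norm ((1 + \<bar>x\<bar>) ^ N * f x) \<le> norm (2 ^ N * (f x + \<bar>x\<bar>^N * f x))"
  proof (intro AE_I2)
    fix x :: real
    have fp: "f x > 0" by (rule pos)
    have "(1 + \<bar>x\<bar>) ^ N * f x \<le> (2 ^ N * (1 + \<bar>x\<bar> ^ N)) * f x"
      using pow_le_2N[of "\<bar>x\<bar>" N] fp by (intro mult_right_mono) auto
    then show "norm ((1 + \<bar>x\<bar>) ^ N * f x) \<le> norm (2 ^ N * (f x + \<bar>x\<bar>^N * f x))"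
      using fp by (simp add: algebra_simps)
  qed
qed

lemma integrable_w:
  assumes b: "\<beta> \<ge> 1" and c: "continuous_on UNIV \<phi>" and bd: "\<And>x. \<bar>\<phi> x\<bar> \<le> C * (1 + \<bar>x\<bar>) ^ N"
  shows "integrable lborel (\<lambda>x. \<phi> x * w \<beta> x)"
proof (rule Bochner_Integration.integrable_bound[where f="\<lambda>x. (C / exp h0) * ((1 + \<bar>x\<bar>) ^ N * f x)"])
  show "integrable lborel (\<lambda>x. (C / exp h0) * ((1 + \<bar>x\<bar>) ^ N * f x))"
    by (intro integrable_mult_right integrable_pow_f)
  show "(\<lambda>x. \<phi> x * w \<beta> x) \<in> borel_measurable lborel"
    unfolding w_def using c cont_h
    by (auto intro!: borel_measurable_continuous_onI continuous_intros)
  show "AE x in lborel. norm (\<phi> x * w \<beta> x) \<le> norm ((C / exp h0) * ((1 + \<bar>x\<bar>) ^ N * f x))"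
  proof (intro AE_I2)
    fix x :: real
    have C0: "C \<ge> 0" using bd[of 0] abs_ge_zero[of "\<phi> 0"] by simp
    have "\<bar>\<phi> x * w \<beta> x\<bar> = \<bar>\<phi> x\<bar> * w \<beta> x" using w_pos[of \<beta> x] by (simp add: abs_mult)
    also have "\<dots> \<le> (C * (1 + \<bar>x\<bar>) ^ N) * (f x / exp h0)"
      by (rule mult_mono[OF bd[of x] w_le[OF b, of x]]) (use w_pos[of \<beta> x] C0 in auto)
    also have "\<dots> = (C / exp h0) * ((1 + \<bar>x\<bar>) ^ N * f x)" by simp
    finally show "norm (\<phi> x * w \<beta> x) \<le> norm ((C / exp h0) * ((1 + \<bar>x\<bar>) ^ N * f x))"
      using C0 pos[of x] by simp
  qed
qed

end

lemma gauss_G_integrable: "integrable lborel (\<lambda>y::real. \<bar>y\<bar>^m * exp (- (y^2) / 2))"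
proof -
  have "integrable lborel (\<lambda>y. sqrt (2 * pi) * (std_normal_density y * \<bar>y\<bar>^m))"
    by (intro integrable_mult_right integrable_std_normal_moment_abs)
  moreover have "(\<lambda>y. sqrt (2 * pi) * (std_normal_density y * \<bar>y\<bar>^m)) = (\<lambda>y::real. \<bar>y\<bar>^m * exp (- (y^2) / 2))"
    by (auto simp: std_normal_density_def)
  ultimately show ?thesis by simp
qed

lemma gauss_int:
  fixes \<kappa> :: real assumes k: "\<kappa> > 0"
  shows "integrable lborel (\<lambda>x. \<bar>x\<bar>^m * exp (- \<kappa> * x^2))"
    and "(\<integral>x. \<bar>x\<bar>^m * exp (- \<kappa> * x^2) \<partial>lborel) =
           (2 * \<kappa>) powr (- (real m + 1) / 2) * (\<integral>y. \<bar>y\<bar>^m * exp (- (y^2) / 2) \<partial>lborel)"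
proof -
  define s where "s = (2 * \<kappa>) powr (- 1 / 2)"
  have s0: "s > 0" using k by (simp add: s_def)
  have s2: "s ^ 2 = 1 / (2 * \<kappa>)"
    using k by (simp add: s_def powr_power powr_neg_one)
  define F where "F = (\<lambda>x::real. \<bar>x\<bar>^m * exp (- \<kappa> * x^2))"
  have FF: "(\<lambda>y. F (0 + s * y)) = (\<lambda>y. s ^ m * (\<bar>y\<bar>^m * exp (- (y^2) / 2)))"
  proof
    fix y :: real
    have "\<kappa> * (s * y)^2 = \<kappa> * s^2 * y^2" by (simp add: power_mult_distrib)
    also have "\<dots> = y^2 / 2" using k s2 by simp
    finally have e: "\<kappa> * (s * y)^2 = y^2 / 2" .
    show "F (0 + s * y) = s ^ m * (\<bar>y\<bar>^m * exp (- (y^2) / 2))"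
      unfolding F_def using s0 e by (simp add: abs_mult power_mult_distrib)
  qed
  have "integrable lborel (\<lambda>y. F (0 + s * y))"
    unfolding FF by (intro integrable_mult_right gauss_G_integrable)
  then show "integrable lborel (\<lambda>x. \<bar>x\<bar>^m * exp (- \<kappa> * x^2))"
    using lborel_integrable_real_affine_iff[of s F 0] s0 by (simp add: F_def)
  have "(\<integral>x. F x \<partial>lborel) = \<bar>s\<bar> *\<^sub>R (\<integral>y. F (0 + s * y) \<partial>lborel)"
    using s0 by (intro lborel_integral_real_affine) simp
  also have "\<dots> = s * (s ^ m * (\<integral>y. \<bar>y\<bar>^m * exp (- (y^2) / 2) \<partial>lborel))"
    unfolding FF using s0 by simp
  also have "s * s ^ m = (2 * \<kappa>) powr (- (real m + 1) / 2)"
  proof -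
    have "s * s ^ m = s ^ (Suc m)" by simp
    also have "\<dots> = (2 * \<kappa>) powr (real (Suc m) * (- 1 / 2))"
      unfolding s_def by (rule powr_power) (use k in simp)
    also have "\<dots> = (2 * \<kappa>) powr (- (real m + 1) / 2)"
      by (rule arg_cong[where f="\<lambda>e. (2 * \<kappa>) powr e"]) (simp add: field_simps)
    finally show ?thesis .
  qed
  then have "s * (s ^ m * G) = (2 * \<kappa>) powr (- (real m + 1) / 2) * G" for G
    by (metis mult.assoc)
  finally show "(\<integral>x. \<bar>x\<bar>^m * exp (- \<kappa> * x^2) \<partial>lborel) =
           (2 * \<kappa>) powr (- (real m + 1) / 2) * (\<integral>y. \<bar>y\<bar>^m * exp (- (y^2) / 2) \<partial>lborel)"
    by (simp add: F_def)
qed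

context L1
begin

definition "KK = - H2 0 / 2 + \<bar>H3 0\<bar> / 6 + M / 24"
definition "cc = - H2 0 / 4"
definition "dl = min 1 (3 * (- H2 0) / (2 * (\<bar>H3 0\<bar> + M)))"
definition "eta = cc * dl^2"

lemma cc_pos: "cc > 0" using a_neg by (simp add: cc_def)
lemma dl_pos: "dl > 0"
proof -
  have "3 * (- H2 0) / (2 * (\<bar>H3 0\<bar> + M)) > 0" using a_neg Mpos by (intro divide_pos_pos) auto
  then show ?thesis by (simp add: dl_def)
qed
lemma dl_le1: "dl \<le> 1" by (simp add: dl_def)
lemma eta_pos: "eta > 0" using cc_pos dl_pos by (simp add: eta_def)

lemma pow_small: fixes x :: real assumes "\<bar>x\<bar> \<le> 1" shows "\<bar>x\<bar>^3 \<le> x^2" "x^4 \<le> \<bar>x\<bar>^3"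
proof -
  have "\<bar>x\<bar>^3 = \<bar>x\<bar> * \<bar>x\<bar>^2" by (simp add: eval_nat_numeral)
  also have "\<dots> = \<bar>x\<bar> * x^2" by (simp only: power2_abs)
  also have "\<dots> \<le> 1 * x^2" using assms by (intro mult_right_mono) auto
  finally show "\<bar>x\<bar>^3 \<le> x^2" by simp
  have "x^4 = \<bar>x\<bar> * \<bar>x\<bar>^3" by (simp add: eval_nat_numeral power_abs[symmetric] abs_mult[symmetric])
  also have "\<dots> \<le> 1 * \<bar>x\<bar>^3" using assms by (intro mult_right_mono) auto
  finally show "x^4 \<le> \<bar>x\<bar>^3" by simp
qed

lemma U_two_sided: "hfun f x - h0 \<ge> H2 0 / 2 * x^2 - \<bar>H3 0\<bar> / 6 * \<bar>x\<bar>^3 - M / 24 * x^4"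
  "hfun f x - h0 \<le> H2 0 / 2 * x^2 + \<bar>H3 0\<bar> / 6 * \<bar>x\<bar>^3 + M / 24 * x^4"
proof -
  have u: "\<bar>hfun f x - h0 - H2 0 / 2 * x^2 - H3 0 / 6 * x^3\<bar> \<le> M / 24 * x^4"
    using U_bound[of x] by (simp add: h0_def)
  have v0: "\<bar>H3 0 / 6 * x^3\<bar> \<le> \<bar>H3 0\<bar> / 6 * \<bar>x\<bar>^3" by (simp add: abs_mult power_abs)
  then have v: "- (\<bar>H3 0\<bar> / 6 * \<bar>x\<bar>^3) \<le> H3 0 / 6 * x^3 \<and> H3 0 / 6 * x^3 \<le> \<bar>H3 0\<bar> / 6 * \<bar>x\<bar>^3"
    unfolding abs_le_iff by linarith
  show "hfun f x - h0 \<ge> H2 0 / 2 * x^2 - \<bar>H3 0\<bar> / 6 * \<bar>x\<bar>^3 - M / 24 * x^4"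
    using u v unfolding abs_le_iff by linarith
  show "hfun f x - h0 \<le> H2 0 / 2 * x^2 + \<bar>H3 0\<bar> / 6 * \<bar>x\<bar>^3 + M / 24 * x^4"
    using u v unfolding abs_le_iff by linarith
qed

lemma lower_quad: assumes "\<bar>x\<bar> \<le> 1" shows "hfun f x - h0 \<ge> - KK * x^2"
proof -
  have p3: "\<bar>x\<bar>^3 \<le> x^2" and p4: "x^4 \<le> \<bar>x\<bar>^3" using pow_small[OF assms] by auto
  have b: "\<bar>H3 0\<bar> / 6 * \<bar>x\<bar>^3 \<le> \<bar>H3 0\<bar> / 6 * x^2" using p3 by (intro mult_left_mono) auto
  have m: "M / 24 * x^4 \<le> M / 24 * x^2" using p3 p4 Mpos by (intro mult_left_mono) auto
  have "- KK * x^2 = H2 0 / 2 * x^2 - \<bar>H3 0\<bar> / 6 * x^2 - M / 24 * x^2"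
    by (simp add: KK_def algebra_simps)
  then show ?thesis using U_two_sided(1)[of x] b m by linarith
qed

lemma upper_quad: assumes "\<bar>x\<bar> \<le> dl" shows "hfun f x - h0 \<le> - cc * x^2"
proof -
  have x1: "\<bar>x\<bar> \<le> 1" using assms dl_le1 by linarith
  have p4: "x^4 \<le> \<bar>x\<bar>^3" using pow_small[OF x1] by auto
  have e3: "\<bar>x\<bar>^3 = \<bar>x\<bar> * x^2"
  proof -
    have "\<bar>x\<bar>^3 = \<bar>x\<bar> * \<bar>x\<bar>^2" by (simp add: eval_nat_numeral)
    then show ?thesis by (simp only: power2_abs)
  qed
  have m1: "M / 24 * x^4 \<le> M / 24 * \<bar>x\<bar>^3" using p4 Mpos by (intro mult_left_mono) auto
  have m2: "M / 24 * \<bar>x\<bar>^3 \<le> M / 6 * \<bar>x\<bar>^3" using Mpos by (intro mult_right_mono) auto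
  have m: "M / 24 * x^4 \<le> M / 6 * \<bar>x\<bar>^3" using m1 m2 by linarith
  have "(\<bar>H3 0\<bar> + M) * \<bar>x\<bar> \<le> (\<bar>H3 0\<bar> + M) * dl" using assms Mpos by (intro mult_left_mono) auto
  also have "\<dots> \<le> 3 * (- H2 0) / 2"
  proof -
    have p: "\<bar>H3 0\<bar> + M > 0" using Mpos by simp
    have "dl \<le> 3 * (- H2 0) / (2 * (\<bar>H3 0\<bar> + M))" by (simp add: dl_def)
    then have "dl * (\<bar>H3 0\<bar> + M) \<le> 3 * (- H2 0) / 2" using p by (simp add: pos_le_divide_eq field_simps)
    then show ?thesis by (simp add: mult.commute)
  qed
  finally have q: "(\<bar>H3 0\<bar> + M) / 6 * \<bar>x\<bar> \<le> - H2 0 / 4" by simp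
  have "(\<bar>H3 0\<bar> + M) / 6 * \<bar>x\<bar> * x^2 \<le> - H2 0 / 4 * x^2" using q by (intro mult_right_mono) auto
  moreover have "\<bar>H3 0\<bar> / 6 * \<bar>x\<bar>^3 + M / 6 * \<bar>x\<bar>^3 = (\<bar>H3 0\<bar> + M) / 6 * \<bar>x\<bar> * x^2"
    unfolding e3 by (simp add: algebra_simps)
  moreover have "- cc * x^2 = H2 0 / 2 * x^2 + (- H2 0 / 4 * x^2)" by (simp add: cc_def algebra_simps)
  ultimately show ?thesis using U_two_sided(2)[of x] m by linarith
qed

lemma far: assumes "dl \<le> \<bar>x\<bar>" shows "hfun f x - h0 \<le> - eta"
proof -
  have "hfun f x \<le> hfun f (if x \<ge> 0 then dl else - dl)"
  proof (cases "x \<ge> 0")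
    case True
    then have "f x \<le> f dl" using assms dl_pos by (intro unimodal_right) auto
    then show ?thesis using True pos[of x] by (simp add: hfun_def)
  next
    case False
    then have "f x \<le> f (- dl)" using assms dl_pos by (intro unimodal_left) auto
    then show ?thesis using False pos[of x] by (simp add: hfun_def)
  qed
  moreover have "hfun f (if x \<ge> 0 then dl else - dl) - h0 \<le> - cc * dl^2"
    using upper_quad[of "if x \<ge> 0 then dl else - dl"] dl_pos by auto
  ultimately show ?thesis by (simp add: eta_def)
qed

lemma w_upper: assumes b: "\<beta> \<ge> 1"
  shows "w \<beta> x \<le> exp (- (\<beta> * cc) * x^2) + exp (- (\<beta> - 1) * eta) * exp (hfun f x - h0)"
proof (cases "\<bar>x\<bar> \<le> dl")
  case True
  have "\<beta> * (hfun f x - h0) \<le> \<beta> * (- cc * x^2)"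
    using upper_quad[OF True] b by (intro mult_left_mono) auto
  then have "w \<beta> x \<le> exp (- (\<beta> * cc) * x^2)" by (simp add: w_def)
  moreover have "0 \<le> exp (- (\<beta> - 1) * eta) * exp (hfun f x - h0)" by simp
  ultimately show ?thesis by linarith
next
  case False
  have n: "hfun f x - h0 \<le> - eta" using far False by simp
  have "(\<beta> - 1) * (hfun f x - h0) \<le> (\<beta> - 1) * (- eta)" using n b by (intro mult_left_mono) auto
  then have "\<beta> * (hfun f x - h0) \<le> - (\<beta> - 1) * eta + (hfun f x - h0)" by (simp add: algebra_simps)
  then have "w \<beta> x \<le> exp (- (\<beta> - 1) * eta) * exp (hfun f x - h0)"
    by (simp add: w_def flip: exp_add)
  moreover have "0 \<le> exp (- (\<beta> * cc) * x^2)" by simp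
  ultimately show ?thesis by linarith
qed

lemma w_lower: assumes b: "\<beta> \<ge> 1" and x: "\<bar>x\<bar> \<le> 1 / sqrt \<beta>" shows "w \<beta> x \<ge> exp (- KK)"
proof -
  have sb: "sqrt \<beta> \<ge> 1" using b by simp
  have "1 / sqrt \<beta> \<le> 1" using sb by simp
  then have x1: "\<bar>x\<bar> \<le> 1" using x by linarith
  have "\<bar>x\<bar>^2 \<le> (1 / sqrt \<beta>)^2" using x by (intro power_mono) auto
  then have "x^2 \<le> (1 / sqrt \<beta>)^2" by simp
  then have x2: "\<beta> * x^2 \<le> 1" using b by (simp add: power_divide field_simps)
  have K0: "KK \<ge> 0" using a_neg Mpos by (simp add: KK_def)
  have "\<beta> * (hfun f x - h0) \<ge> \<beta> * (- KK * x^2)" using lower_quad[OF x1] b by (intro mult_left_mono) auto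
  moreover have "\<beta> * (- KK * x^2) = - KK * (\<beta> * x^2)" by simp
  moreover have "- KK * (\<beta> * x^2) \<ge> - KK * 1" using x2 K0 by (intro mult_left_mono_neg) auto
  ultimately have "\<beta> * (hfun f x - h0) \<ge> - KK" by linarith
  then show ?thesis by (simp add: w_def)
qed

end

lemma exp_sqrt_bigo: "(e::real) > 0 \<Longrightarrow> (\<lambda>\<beta>. exp (- (\<beta> - 1) * e) * sqrt \<beta>) \<in> O[at_top](\<lambda>\<beta>. \<beta> powr p)"
  by real_asymp

context L1
begin

definition "Z \<beta> = (\<integral>x. w \<beta> x \<partial>lborel)"
definition "P m \<beta> = (\<integral>x. \<bar>x\<bar>^m * w \<beta> x \<partial>lborel)"
definition "Gm m = (\<integral>(y::real). \<bar>y\<bar>^m * exp (- (y^2) / 2) \<partial>lborel)"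
definition "Tm m = (\<integral>x. \<bar>x\<bar>^m * exp (hfun f x - h0) \<partial>lborel)"
definition "Mo m \<beta> = P m \<beta> / Z \<beta>"

lemma int_w_pow: "\<beta> \<ge> 1 \<Longrightarrow> integrable lborel (\<lambda>x. \<bar>x\<bar>^m * w \<beta> x)"
proof (rule integrable_w[where C=1 and N=m])
  show "continuous_on UNIV (\<lambda>x::real. \<bar>x\<bar>^m)" by (intro continuous_intros)
  show "\<bar>\<bar>x\<bar>^m\<bar> \<le> 1 * (1 + \<bar>x\<bar>) ^ m" for x :: real by (simp add: power_mono)
qed

lemma int_w: "\<beta> \<ge> 1 \<Longrightarrow> integrable lborel (w \<beta>)"
  using int_w_pow[of \<beta> 0] by simp

lemma exp_hh0: "exp (hfun f x - h0) = f x / exp h0"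
  using f_eq[of x] by simp

lemma int_T: "integrable lborel (\<lambda>x. \<bar>x\<bar>^m * exp (hfun f x - h0))"
proof -
  have "integrable lborel (\<lambda>x. (1 / exp h0) * (\<bar>x\<bar>^m * f x))"
    by (intro integrable_mult_right tail)
  then show ?thesis by (simp add: exp_hh0)
qed

lemma Z_lower: assumes b: "\<beta> \<ge> 1" shows "2 * exp (- KK) / sqrt \<beta> \<le> Z \<beta>"
proof -
  define s where "s = 1 / sqrt \<beta>"
  have s0: "s > 0" using b by (simp add: s_def)
  have le: "exp (- KK) * indicator {-s..s} x \<le> w \<beta> x" for x
  proof (cases "x \<in> {-s..s}")
    case True
    then have "\<bar>x\<bar> \<le> 1 / sqrt \<beta>" by (auto simp: s_def)
    then show ?thesis using w_lower[OF b] True by simp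
  next
    case False
    then show ?thesis using w_pos[of \<beta> x] by simp
  qed
  have "(\<integral>x. exp (- KK) * indicator {-s..s} x \<partial>lborel) \<le> Z \<beta>"
    unfolding Z_def
  proof (rule integral_mono)
    show "integrable lborel (\<lambda>x. exp (- KK) * indicator {-s..s} x)"
      by (intro integrable_mult_right integrable_real_indicator) (use s0 in \<open>auto simp: emeasure_lborel_Icc\<close>)
  qed (use le int_w[OF b] in auto)
  moreover have "(\<integral>x. exp (- KK) * indicator {-s..s} x \<partial>lborel) = exp (- KK) * (2 * s)"
    using s0 by simp
  moreover have "2 * exp (- KK) / sqrt \<beta> = exp (- KK) * (2 * s)" by (simp add: s_def)
  ultimately show ?thesis by linarith
qed

lemma Z_pos: "\<beta> \<ge> 1 \<Longrightarrow> Z \<beta> > 0"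
  using Z_lower[of \<beta>] by (smt (verit) divide_pos_pos exp_gt_zero real_sqrt_gt_zero)

lemma P_nonneg: "P m \<beta> \<ge> 0"
  unfolding P_def by (intro integral_nonneg_AE AE_I2) (simp add: w_pos less_imp_le)

lemma Gm_nonneg: "Gm m \<ge> 0"
  unfolding Gm_def by (intro integral_nonneg_AE) auto

lemma Tm_nonneg: "Tm m \<ge> 0"
  unfolding Tm_def by (intro integral_nonneg_AE) auto

lemma P_upper: assumes b: "\<beta> \<ge> 1"
  shows "P m \<beta> \<le> (2 * (\<beta> * cc)) powr (- (real m + 1) / 2) * Gm m + exp (- (\<beta> - 1) * eta) * Tm m"
proof -
  have k: "\<beta> * cc > 0" using b cc_pos by simp
  have i1: "integrable lborel (\<lambda>x. \<bar>x\<bar>^m * exp (- (\<beta> * cc) * x^2))"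
    using gauss_int(1)[OF k] .
  have i2: "integrable lborel (\<lambda>x. exp (- (\<beta> - 1) * eta) * (\<bar>x\<bar>^m * exp (hfun f x - h0)))"
    by (intro integrable_mult_right int_T)
  have "P m \<beta> \<le> (\<integral>x. \<bar>x\<bar>^m * exp (- (\<beta> * cc) * x^2) + exp (- (\<beta> - 1) * eta) * (\<bar>x\<bar>^m * exp (hfun f x - h0)) \<partial>lborel)"
    unfolding P_def
  proof (rule integral_mono)
    show "integrable lborel (\<lambda>x. \<bar>x\<bar>^m * w \<beta> x)" by (rule int_w_pow[OF b])
    show "integrable lborel (\<lambda>x. \<bar>x\<bar>^m * exp (- (\<beta> * cc) * x^2) + exp (- (\<beta> - 1) * eta) * (\<bar>x\<bar>^m * exp (hfun f x - h0)))"
      by (rule Bochner_Integration.integrable_add[OF i1 i2])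
    fix x :: real
    have "\<bar>x\<bar>^m * w \<beta> x \<le> \<bar>x\<bar>^m * (exp (- (\<beta> * cc) * x^2) + exp (- (\<beta> - 1) * eta) * exp (hfun f x - h0))"
      using w_upper[OF b, of x] by (intro mult_left_mono) auto
    then show "\<bar>x\<bar>^m * w \<beta> x \<le> \<bar>x\<bar>^m * exp (- (\<beta> * cc) * x^2) + exp (- (\<beta> - 1) * eta) * (\<bar>x\<bar>^m * exp (hfun f x - h0))"
      by (simp add: algebra_simps)
  qed
  also have "\<dots> = (\<integral>x. \<bar>x\<bar>^m * exp (- (\<beta> * cc) * x^2) \<partial>lborel) + exp (- (\<beta> - 1) * eta) * Tm m"
    unfolding Tm_def using i1 int_T by simp
  also have "(\<integral>x. \<bar>x\<bar>^m * exp (- (\<beta> * cc) * x^2) \<partial>lborel) = (2 * (\<beta> * cc)) powr (- (real m + 1) / 2) * Gm m"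
    unfolding Gm_def by (rule gauss_int(2)[OF k])
  finally show ?thesis .
qed

lemma Mo_nonneg: "\<beta> \<ge> 1 \<Longrightarrow> Mo m \<beta> \<ge> 0"
  unfolding Mo_def using P_nonneg Z_pos by (simp add: less_imp_le)

lemma Mo_upper: assumes b: "\<beta> \<ge> 1"
  shows "Mo m \<beta> \<le> ((2 * cc) powr (- (real m + 1) / 2) * Gm m / (2 * exp (- KK))) * \<beta> powr (- real m / 2)
     + (Tm m / (2 * exp (- KK))) * (exp (- (\<beta> - 1) * eta) * sqrt \<beta>)"
proof -
  have b0: "\<beta> > 0" using b by simp
  have Zp: "Z \<beta> > 0" using Z_pos[OF b] .
  have L: "2 * exp (- KK) / sqrt \<beta> > 0" using b0 by simp
  have "Mo m \<beta> \<le> P m \<beta> / (2 * exp (- KK) / sqrt \<beta>)"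
    unfolding Mo_def
  proof (rule divide_left_mono)
    show "2 * exp (- KK) / sqrt \<beta> \<le> Z \<beta>" using Z_lower[OF b] .
    show "0 \<le> P m \<beta>" by (rule P_nonneg)
    show "0 < Z \<beta> * (2 * exp (- KK) / sqrt \<beta>)" by (rule mult_pos_pos[OF Zp L])
  qed
  also have "\<dots> \<le> ((2 * (\<beta> * cc)) powr (- (real m + 1) / 2) * Gm m + exp (- (\<beta> - 1) * eta) * Tm m) / (2 * exp (- KK) / sqrt \<beta>)"
    using P_upper[OF b] L by (intro divide_right_mono) auto
  also have "\<dots> = ((2 * (\<beta> * cc)) powr (- (real m + 1) / 2) * sqrt \<beta>) * Gm m / (2 * exp (- KK))
       + (Tm m / (2 * exp (- KK))) * (exp (- (\<beta> - 1) * eta) * sqrt \<beta>)"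
    using b0 by (simp add: field_simps)
  also have "(2 * (\<beta> * cc)) powr (- (real m + 1) / 2) * sqrt \<beta> = (2 * cc) powr (- (real m + 1) / 2) * \<beta> powr (- real m / 2)"
  proof -
    have "(2 * (\<beta> * cc)) powr (- (real m + 1) / 2) = (2 * cc) powr (- (real m + 1) / 2) * \<beta> powr (- (real m + 1) / 2)"
      using b0 cc_pos by (simp add: powr_mult[symmetric] mult_ac)
    moreover have "\<beta> powr (- (real m + 1) / 2) * sqrt \<beta> = \<beta> powr (- real m / 2)"
    proof -
      have "sqrt \<beta> = \<beta> powr (1 / 2)" using b0 by (simp add: powr_half_sqrt)
      then have "\<beta> powr (- (real m + 1) / 2) * sqrt \<beta> = \<beta> powr (- (real m + 1) / 2 + 1 / 2)"
        by (simp add: powr_add)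
      also have "- (real m + 1) / 2 + 1 / 2 = - real m / 2" by (simp add: field_simps)
      finally show ?thesis .
    qed
    ultimately show ?thesis by (metis mult.assoc)
  qed
  finally show ?thesis by (simp add: mult_ac)
qed

lemma Mo_bigo: "(\<lambda>\<beta>. Mo m \<beta>) \<in> O[at_top](\<lambda>\<beta>. \<beta> powr (- real m / 2))"
proof -
  define C1 where "C1 = (2 * cc) powr (- (real m + 1) / 2) * Gm m / (2 * exp (- KK)) + 1"
  define C2 where "C2 = Tm m / (2 * exp (- KK)) + 1"
  have "0 \<le> (2 * cc) powr (- (real m + 1) / 2) * Gm m / (2 * exp (- KK))"
    by (intro divide_nonneg_pos mult_nonneg_nonneg) (auto simp: Gm_nonneg)
  then have C1: "C1 > 0" by (simp add: C1_def)
  have "0 \<le> Tm m / (2 * exp (- KK))"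
    by (intro divide_nonneg_pos) (auto simp: Tm_nonneg)
  then have C2: "C2 > 0" by (simp add: C2_def)
  have ev: "eventually (\<lambda>\<beta>. norm (Mo m \<beta>) \<le> 1 * norm (C1 * \<beta> powr (- real m / 2) + C2 * (exp (- (\<beta> - 1) * eta) * sqrt \<beta>))) at_top"
    using eventually_ge_at_top[of 1]
  proof eventually_elim
    case (elim \<beta>)
    have "Mo m \<beta> \<le> ((2 * cc) powr (- (real m + 1) / 2) * Gm m / (2 * exp (- KK))) * \<beta> powr (- real m / 2)
     + (Tm m / (2 * exp (- KK))) * (exp (- (\<beta> - 1) * eta) * sqrt \<beta>)" using Mo_upper[OF elim] .
    also have "\<dots> \<le> C1 * \<beta> powr (- real m / 2) + C2 * (exp (- (\<beta> - 1) * eta) * sqrt \<beta>)"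
      unfolding C1_def C2_def using elim by (intro add_mono mult_right_mono) auto
    finally have u: "Mo m \<beta> \<le> C1 * \<beta> powr (- real m / 2) + C2 * (exp (- (\<beta> - 1) * eta) * sqrt \<beta>)" .
    have "0 \<le> Mo m \<beta>" using Mo_nonneg[OF elim] .
    then show ?case using u by simp
  qed
  have "(\<lambda>\<beta>. Mo m \<beta>) \<in> O[at_top](\<lambda>\<beta>. C1 * \<beta> powr (- real m / 2) + C2 * (exp (- (\<beta> - 1) * eta) * sqrt \<beta>))"
    by (rule landau_o.bigI[OF zero_less_one ev])
  also have "(\<lambda>\<beta>. C1 * \<beta> powr (- real m / 2) + C2 * (exp (- (\<beta> - 1) * eta) * sqrt \<beta>)) \<in> O[at_top](\<lambda>\<beta>. \<beta> powr (- real m / 2))"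
  proof (rule sum_in_bigo)
    show "(\<lambda>\<beta>. C1 * \<beta> powr (- real m / 2)) \<in> O[at_top](\<lambda>\<beta>. \<beta> powr (- real m / 2))"
      using C1 by simp
    have "(\<lambda>\<beta>. exp (- (\<beta> - 1) * eta) * sqrt \<beta>) \<in> O[at_top](\<lambda>\<beta>. \<beta> powr (- real m / 2))"
      using exp_sqrt_bigo[OF eta_pos] .
    then show "(\<lambda>\<beta>. C2 * (exp (- (\<beta> - 1) * eta) * sqrt \<beta>)) \<in> O[at_top](\<lambda>\<beta>. \<beta> powr (- real m / 2))"
      using C2 by simp
  qed
  finally show ?thesis .
qed

end

lemma pow_le_1plus: "j \<le> N \<Longrightarrow> \<bar>x::real\<bar>^j \<le> (1 + \<bar>x\<bar>)^N"
proof -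
  assume "j \<le> N"
  have "\<bar>x\<bar>^j \<le> (1 + \<bar>x\<bar>)^j" by (intro power_mono) auto
  also have "\<dots> \<le> (1 + \<bar>x\<bar>)^N" using \<open>j \<le> N\<close> by (intro power_increasing) auto
  finally show ?thesis .
qed

context L1
begin

definition "U x = hfun f x - h0"
definition "D x = x * H1 x / 2 - U x"
definition "Q \<beta> \<phi> = (\<integral>x. \<phi> x * w \<beta> x \<partial>lborel)"

definition "A2 = \<bar>H2 0\<bar> / 2"
definition "A3 = \<bar>H3 0\<bar> / 6"
definition "A4 = M / 24"
definition "B3 = \<bar>H3 0\<bar> / 12"
definition "B4 = M / 8"

lemma coef_nonneg: "A2 \<ge> 0" "A3 \<ge> 0" "A4 \<ge> 0" "B3 \<ge> 0" "B4 \<ge> 0"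
  using Mpos by (auto simp: A2_def A3_def A4_def B3_def B4_def)

lemma cont_U: "continuous_on UNIV U"
  unfolding U_def[abs_def] using cont_h by (intro continuous_intros)
lemma cont_D: "continuous_on UNIV D"
  unfolding D_def[abs_def] using cont_U cont_H1 by (auto intro!: continuous_intros)

lemma U_abs: "\<bar>U x\<bar> \<le> A2 * x^2 + A3 * \<bar>x\<bar>^3 + A4 * x^4"
proof -
  have u: "\<bar>U x - H2 0 / 2 * x^2 - H3 0 / 6 * x^3\<bar> \<le> M / 24 * x^4"
    using U_bound[of x] by (simp add: U_def h0_def)
  have e1: "\<bar>H2 0 / 2 * x^2\<bar> = A2 * x^2" by (simp add: A2_def abs_mult)
  have e2: "\<bar>H3 0 / 6 * x^3\<bar> = A3 * \<bar>x\<bar>^3" by (simp add: A3_def abs_mult power_abs)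
  show ?thesis unfolding abs_le_iff
    using u e1 e2 abs_ge_self[of "H2 0 / 2 * x^2"] abs_ge_minus_self[of "H2 0 / 2 * x^2"]
      abs_ge_self[of "H3 0 / 6 * x^3"] abs_ge_minus_self[of "H3 0 / 6 * x^3"]
      abs_ge_self[of "U x - H2 0 / 2 * x^2 - H3 0 / 6 * x^3"]
      abs_ge_minus_self[of "U x - H2 0 / 2 * x^2 - H3 0 / 6 * x^3"]
    unfolding A4_def by linarith
qed

lemma D_abs: "\<bar>D x\<bar> \<le> B3 * \<bar>x\<bar>^3 + B4 * x^4"
proof -
  have u: "\<bar>D x - H3 0 / 12 * x^3\<bar> \<le> M / 8 * x^4"
    using D_bound[of x] by (simp add: D_def U_def h0_def)
  have e2: "\<bar>H3 0 / 12 * x^3\<bar> = B3 * \<bar>x\<bar>^3" by (simp add: B3_def abs_mult power_abs)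
  show ?thesis unfolding abs_le_iff
    using u e2 abs_ge_self[of "H3 0 / 12 * x^3"] abs_ge_minus_self[of "H3 0 / 12 * x^3"]
      abs_ge_self[of "D x - H3 0 / 12 * x^3"] abs_ge_minus_self[of "D x - H3 0 / 12 * x^3"]
    unfolding B4_def by linarith
qed

lemma U_poly: "\<bar>U x\<bar> \<le> (A2 + A3 + A4) * (1 + \<bar>x\<bar>)^4"
proof -
  have "x^2 \<le> (1 + \<bar>x\<bar>)^4" using pow_le_1plus[of 2 4 x] by (simp only: power2_abs)
  then have "A2 * x^2 \<le> A2 * (1 + \<bar>x\<bar>)^4" using coef_nonneg by (intro mult_left_mono) auto
  moreover have "A3 * \<bar>x\<bar>^3 \<le> A3 * (1 + \<bar>x\<bar>)^4" using pow_le_1plus[of 3 4 x] coef_nonneg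
    by (intro mult_left_mono) auto
  moreover have "x^4 \<le> (1 + \<bar>x\<bar>)^4" using pow_le_1plus[of 4 4 x] by (simp add: power_even_abs_numeral)
  then have "A4 * x^4 \<le> A4 * (1 + \<bar>x\<bar>)^4" using coef_nonneg by (intro mult_left_mono) auto
  ultimately show ?thesis using U_abs[of x] by (simp add: algebra_simps)
qed

lemma D_poly: "\<bar>D x\<bar> \<le> (B3 + B4) * (1 + \<bar>x\<bar>)^4"
proof -
  have "B3 * \<bar>x\<bar>^3 \<le> B3 * (1 + \<bar>x\<bar>)^4" using pow_le_1plus[of 3 4 x] coef_nonneg
    by (intro mult_left_mono) auto
  moreover have "x^4 \<le> (1 + \<bar>x\<bar>)^4" using pow_le_1plus[of 4 4 x] by (simp add: power_even_abs_numeral)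
  then have "B4 * x^4 \<le> B4 * (1 + \<bar>x\<bar>)^4" using coef_nonneg by (intro mult_left_mono) auto
  ultimately show ?thesis using D_abs[of x] by (simp add: algebra_simps)
qed

lemma prod_poly: assumes "\<bar>p x\<bar> \<le> c1 * (1 + \<bar>x\<bar>)^4" "\<bar>q x\<bar> \<le> c2 * (1 + \<bar>x\<bar>)^4"
  shows "\<bar>p x * q x\<bar> \<le> (c1 * c2) * (1 + \<bar>x::real\<bar>)^8"
proof -
  have "\<bar>p x * q x\<bar> = \<bar>p x\<bar> * \<bar>q x\<bar>" by (simp add: abs_mult)
  also have "\<dots> \<le> (c1 * (1 + \<bar>x\<bar>)^4) * (c2 * (1 + \<bar>x\<bar>)^4)"
    by (rule mult_mono[OF assms]) (use assms(1) in auto)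
  also have "\<dots> = (c1 * c2) * (1 + \<bar>x\<bar>)^8" by (simp add: algebra_simps flip: power_add)
  finally show ?thesis .
qed

lemma iU: "\<beta> \<ge> 1 \<Longrightarrow> integrable lborel (\<lambda>x. U x * w \<beta> x)"
  by (rule integrable_w[OF _ cont_U U_poly])
lemma iD: "\<beta> \<ge> 1 \<Longrightarrow> integrable lborel (\<lambda>x. D x * w \<beta> x)"
  by (rule integrable_w[OF _ cont_D D_poly])
lemma iUU: "\<beta> \<ge> 1 \<Longrightarrow> integrable lborel (\<lambda>x. (U x * U x) * w \<beta> x)"
  by (rule integrable_w[where N=8, OF _ _ prod_poly[where p=U and q=U, OF U_poly U_poly]])
     (use cont_U in \<open>auto intro!: continuous_intros\<close>)
lemma iUD: "\<beta> \<ge> 1 \<Longrightarrow> integrable lborel (\<lambda>x. (U x * D x) * w \<beta> x)"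
  by (rule integrable_w[where N=8, OF _ _ prod_poly[where p=U and q=D, OF U_poly D_poly]])
     (use cont_U cont_D in \<open>auto intro!: continuous_intros\<close>)

end

context L1
begin

lemma tilt_eq: "tilt f \<beta> x = exp (\<beta> * h0) * w \<beta> x"
proof -
  have "tilt f \<beta> x = exp (\<beta> * hfun f x)"
    using pos[of x] by (simp add: tilt_def powr_def hfun_def mult.commute)
  also have "\<dots> = exp (\<beta> * h0 + \<beta> * (hfun f x - h0))" by (simp add: algebra_simps)
  also have "\<dots> = exp (\<beta> * h0) * w \<beta> x" by (simp add: w_def exp_add)
  finally show ?thesis .
qed

lemma wmean_eq: "wmean (tilt f \<beta>) \<phi> = Q \<beta> \<phi> / Z \<beta>"
proof -
  have "(\<integral>x. \<phi> x * tilt f \<beta> x \<partial>lborel) = exp (\<beta> * h0) * Q \<beta> \<phi>"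
  proof -
    have "(\<lambda>x. \<phi> x * tilt f \<beta> x) = (\<lambda>x. exp (\<beta> * h0) * (\<phi> x * w \<beta> x))"
      by (rule ext) (simp add: tilt_eq)
    then show ?thesis unfolding Q_def by simp
  qed
  moreover have "(\<integral>x. tilt f \<beta> x \<partial>lborel) = exp (\<beta> * h0) * Z \<beta>"
    unfolding tilt_eq Z_def by simp
  ultimately show ?thesis unfolding wmean_def by simp
qed

lemma h_eq: "hfun f x = U x + h0" by (simp add: U_def)
lemma k_eq: "kfun f x = 2 * U x + 2 * D x" by (simp add: kfun_def hd1 D_def)

lemma Q_add: "integrable lborel (\<lambda>x. p x * w \<beta> x) \<Longrightarrow> integrable lborel (\<lambda>x. q x * w \<beta> x) \<Longrightarrow>
   Q \<beta> (\<lambda>x. p x + q x) = Q \<beta> p + Q \<beta> q"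
  unfolding Q_def by (simp add: distrib_right)

lemma Q_cmult: "Q \<beta> (\<lambda>x. c * p x) = c * Q \<beta> p"
  unfolding Q_def by (simp add: mult.assoc)

lemma Q_one: "Q \<beta> (\<lambda>x. 1) = Z \<beta>" by (simp add: Q_def Z_def)

lemma int_c: "integrable lborel (\<lambda>x. p x * w \<beta> x) \<Longrightarrow> integrable lborel (\<lambda>x. (c * p x) * w \<beta> x)"
  by (simp add: mult.assoc)

lemma Qs: assumes b: "\<beta> \<ge> 1"
  shows "Q \<beta> (hfun f) = Q \<beta> U + h0 * Z \<beta>"
    "Q \<beta> (kfun f) = 2 * Q \<beta> U + 2 * Q \<beta> D"
    "Q \<beta> (\<lambda>x. hfun f x * kfun f x) = 2 * Q \<beta> (\<lambda>x. U x * U x) + 2 * Q \<beta> (\<lambda>x. U x * D x) + 2 * h0 * Q \<beta> U + 2 * h0 * Q \<beta> D"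
    "Q \<beta> (\<lambda>x. (hfun f x)^2) = Q \<beta> (\<lambda>x. U x * U x) + 2 * h0 * Q \<beta> U + h0^2 * Z \<beta>"
proof -
  have iU: "integrable lborel (\<lambda>x. U x * w \<beta> x)" using iU[OF b] .
  have iD: "integrable lborel (\<lambda>x. D x * w \<beta> x)" using iD[OF b] .
  have iUU: "integrable lborel (\<lambda>x. (U x * U x) * w \<beta> x)" using iUU[OF b] .
  have iUD: "integrable lborel (\<lambda>x. (U x * D x) * w \<beta> x)" using iUD[OF b] .
  have i1: "integrable lborel (\<lambda>x. 1 * w \<beta> x)" using int_w[OF b] by simp
  have "hfun f = (\<lambda>x. U x + h0 * 1)" by (rule ext) (simp add: h_eq)
  then show "Q \<beta> (hfun f) = Q \<beta> U + h0 * Z \<beta>"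
    using Q_add[OF iU int_c[OF i1, of h0]] Q_cmult[of \<beta> h0 "\<lambda>x. 1"] Q_one by simp
  have "kfun f = (\<lambda>x. 2 * U x + 2 * D x)" by (rule ext) (simp add: k_eq)
  then show "Q \<beta> (kfun f) = 2 * Q \<beta> U + 2 * Q \<beta> D"
    using Q_add[OF int_c[OF iU, of 2] int_c[OF iD, of 2]] Q_cmult by simp
  have "(\<lambda>x. hfun f x * kfun f x) = (\<lambda>x. (2 * (U x * U x) + 2 * (U x * D x)) + (2 * h0 * U x + 2 * h0 * D x))"
    by (rule ext) (simp add: h_eq k_eq algebra_simps)
  moreover have "Q \<beta> (\<lambda>x. (2 * (U x * U x) + 2 * (U x * D x)) + (2 * h0 * U x + 2 * h0 * D x))
     = (Q \<beta> (\<lambda>x. 2 * (U x * U x)) + Q \<beta> (\<lambda>x. 2 * (U x * D x))) + (Q \<beta> (\<lambda>x. 2 * h0 * U x) + Q \<beta> (\<lambda>x. 2 * h0 * D x))"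
  proof -
    have a: "integrable lborel (\<lambda>x. (2 * (U x * U x) + 2 * (U x * D x)) * w \<beta> x)"
      using int_c[OF iUU, of 2] int_c[OF iUD, of 2] by (simp add: distrib_right)
    have c: "integrable lborel (\<lambda>x. (2 * h0 * U x + 2 * h0 * D x) * w \<beta> x)"
      using int_c[OF iU, of "2 * h0"] int_c[OF iD, of "2 * h0"] by (simp add: distrib_right)
    show ?thesis
      using Q_add[OF a c] Q_add[OF int_c[OF iUU, of 2] int_c[OF iUD, of 2]]
        Q_add[OF int_c[OF iU, of "2 * h0"] int_c[OF iD, of "2 * h0"]] by simp
  qed
  ultimately show "Q \<beta> (\<lambda>x. hfun f x * kfun f x) = 2 * Q \<beta> (\<lambda>x. U x * U x) + 2 * Q \<beta> (\<lambda>x. U x * D x) + 2 * h0 * Q \<beta> U + 2 * h0 * Q \<beta> D"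
    using Q_cmult[of \<beta> 2 "\<lambda>x. U x * U x"] Q_cmult[of \<beta> 2 "\<lambda>x. U x * D x"]
      Q_cmult[of \<beta> "2 * h0" U] Q_cmult[of \<beta> "2 * h0" D] by simp
  have "(\<lambda>x. (hfun f x)^2) = (\<lambda>x. (U x * U x + 2 * h0 * U x) + h0^2 * 1)"
    by (rule ext) (simp add: h_eq algebra_simps power2_eq_square)
  moreover have "Q \<beta> (\<lambda>x. (U x * U x + 2 * h0 * U x) + h0^2 * 1) = (Q \<beta> (\<lambda>x. U x * U x) + Q \<beta> (\<lambda>x. 2 * h0 * U x)) + Q \<beta> (\<lambda>x. h0^2 * 1)"
  proof -
    have a: "integrable lborel (\<lambda>x. (U x * U x + 2 * h0 * U x) * w \<beta> x)"
      using iUU int_c[OF iU, of "2 * h0"] by (simp add: distrib_right)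
    show ?thesis using Q_add[OF a int_c[OF i1, of "h0^2"]] Q_add[OF iUU int_c[OF iU, of "2 * h0"]] by simp
  qed
  ultimately show "Q \<beta> (\<lambda>x. (hfun f x)^2) = Q \<beta> (\<lambda>x. U x * U x) + 2 * h0 * Q \<beta> U + h0^2 * Z \<beta>"
    using Q_cmult[of \<beta> "2 * h0" U] Q_cmult[of \<beta> "h0^2" "\<lambda>x. 1"] Q_one by simp
qed

lemma main_identity: assumes b: "\<beta> \<ge> 1"
  shows "Vfun f \<beta> / 2 - Ifun f \<beta> = Q \<beta> (\<lambda>x. U x * D x) / Z \<beta> - Q \<beta> U * Q \<beta> D / (Z \<beta>)^2"
proof -
  have Z0: "Z \<beta> \<noteq> 0" using Z_pos[OF b] by simp
  show ?thesis
    unfolding Vfun_def Ifun_def wcov_def wvar_def wmean_eq Qs[OF b]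
    using Z0 by (simp add: field_simps power2_eq_square)
qed

end

context L1
begin

lemma isum: "integrable lborel (\<lambda>x. p x * w \<beta> x) \<Longrightarrow> integrable lborel (\<lambda>x. q x * w \<beta> x) \<Longrightarrow>
   integrable lborel (\<lambda>x. (p x + q x) * w \<beta> x)"
  by (simp add: distrib_right)

lemma ipow: "\<beta> \<ge> 1 \<Longrightarrow> integrable lborel (\<lambda>x. (c * \<bar>x\<bar>^j) * w \<beta> x)"
  using int_c[OF int_w_pow] by blast

lemma Qpow: "Q \<beta> (\<lambda>x. c * \<bar>x\<bar>^j) = c * P j \<beta>"
  using Q_cmult[of \<beta> c "\<lambda>x. \<bar>x\<bar>^j"] by (simp add: Q_def P_def)

lemma Q_abs_le:
  assumes "integrable lborel (\<lambda>x. \<phi> x * w \<beta> x)" "integrable lborel (\<lambda>x. \<psi> x * w \<beta> x)"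
    and "\<And>x. \<bar>\<phi> x\<bar> \<le> \<psi> x"
  shows "\<bar>Q \<beta> \<phi>\<bar> \<le> Q \<beta> \<psi>"
  unfolding Q_def
proof (rule integral_abs_bound_integral[OF assms(1,2)])
  fix x :: real
  have "\<bar>\<phi> x * w \<beta> x\<bar> = \<bar>\<phi> x\<bar> * w \<beta> x" using w_pos[of \<beta> x] by (simp add: abs_mult)
  also have "\<dots> \<le> \<psi> x * w \<beta> x" using assms(3)[of x] w_pos[of \<beta> x] by (intro mult_right_mono) auto
  finally show "\<bar>\<phi> x * w \<beta> x\<bar> \<le> \<psi> x * w \<beta> x" .
qed

definition "psiU x = A2 * \<bar>x\<bar>^2 + A3 * \<bar>x\<bar>^3 + A4 * \<bar>x\<bar>^4"
definition "psiD x = B3 * \<bar>x\<bar>^3 + B4 * \<bar>x\<bar>^4"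
definition "psiUD x = A2 * B3 * \<bar>x\<bar>^5 + (A2 * B4 + A3 * B3) * \<bar>x\<bar>^6 + (A3 * B4 + A4 * B3) * \<bar>x\<bar>^7 + A4 * B4 * \<bar>x\<bar>^8"

lemma psiU_ge: "\<bar>U x\<bar> \<le> psiU x"
  using U_abs[of x] by (simp add: psiU_def power_even_abs_numeral)
lemma psiD_ge: "\<bar>D x\<bar> \<le> psiD x"
  using D_abs[of x] by (simp add: psiD_def power_even_abs_numeral)
lemma psiUD_eq: "psiU x * psiD x = psiUD x"
  by (simp add: psiU_def psiD_def psiUD_def algebra_simps eval_nat_numeral)
lemma psiUD_ge: "\<bar>U x * D x\<bar> \<le> psiUD x"
proof -
  have "\<bar>U x * D x\<bar> = \<bar>U x\<bar> * \<bar>D x\<bar>" by (simp add: abs_mult)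
  also have "\<dots> \<le> psiU x * psiD x"
    by (rule mult_mono[OF psiU_ge psiD_ge]) (use psiU_ge[of x] in auto)
  finally show ?thesis by (simp add: psiUD_eq)
qed

lemma i_psiU: "\<beta> \<ge> 1 \<Longrightarrow> integrable lborel (\<lambda>x. psiU x * w \<beta> x)"
  unfolding psiU_def by (intro isum ipow)
lemma i_psiD: "\<beta> \<ge> 1 \<Longrightarrow> integrable lborel (\<lambda>x. psiD x * w \<beta> x)"
  unfolding psiD_def by (intro isum ipow)
lemma i_psiUD: "\<beta> \<ge> 1 \<Longrightarrow> integrable lborel (\<lambda>x. psiUD x * w \<beta> x)"
  unfolding psiUD_def by (intro isum ipow)

lemma Q_psiU: "\<beta> \<ge> 1 \<Longrightarrow> Q \<beta> psiU = A2 * P 2 \<beta> + A3 * P 3 \<beta> + A4 * P 4 \<beta>"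
  unfolding psiU_def
  by (subst Q_add, (intro isum ipow; assumption)+)+ (simp only: Qpow)
lemma Q_psiD: "\<beta> \<ge> 1 \<Longrightarrow> Q \<beta> psiD = B3 * P 3 \<beta> + B4 * P 4 \<beta>"
  unfolding psiD_def
  by (subst Q_add, (intro isum ipow; assumption)+)+ (simp only: Qpow)
lemma Q_psiUD: "\<beta> \<ge> 1 \<Longrightarrow> Q \<beta> psiUD = A2 * B3 * P 5 \<beta> + (A2 * B4 + A3 * B3) * P 6 \<beta> + (A3 * B4 + A4 * B3) * P 7 \<beta> + A4 * B4 * P 8 \<beta>"
  unfolding psiUD_def
  by (subst Q_add, (intro isum ipow; assumption)+)+ (simp only: Qpow)

end

lemma cm_bigo: "f \<in> O[F](g) \<Longrightarrow> (\<lambda>x. c * f x) \<in> O[F](g)"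
  for f g :: "real \<Rightarrow> real"
  by (cases "c = 0") simp_all

lemma pw_bigo: "a \<le> b \<Longrightarrow> (\<lambda>\<beta>::real. \<beta> powr (- b)) \<in> O[at_top](\<lambda>\<beta>. \<beta> powr (- a))"
proof -
  assume ab: "a \<le> b"
  have "eventually (\<lambda>\<beta>::real. norm (\<beta> powr (- b)) \<le> 1 * norm (\<beta> powr (- a))) at_top"
    using eventually_ge_at_top[of "1::real"]
  proof eventually_elim
    case (elim \<beta>)
    then show ?case using ab by (simp add: powr_mono)
  qed
  then show ?thesis by (rule landau_o.bigI[OF zero_less_one])
qed

context L1
begin

lemma Mo_e: "e \<le> real j / 2 \<Longrightarrow> (\<lambda>\<beta>. Mo j \<beta>) \<in> O[at_top](\<lambda>\<beta>. \<beta> powr (- e))"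
proof -
  assume ej: "e \<le> real j / 2"
  have "- real j / 2 = - (real j / 2)" by simp
  then have a: "(\<lambda>\<beta>. Mo j \<beta>) \<in> O[at_top](\<lambda>\<beta>. \<beta> powr (- (real j / 2)))"
    using Mo_bigo[of j] by metis
  show ?thesis by (rule landau_o.big_trans[OF a pw_bigo[OF ej]])
qed

lemma cMo_e: "c = 0 \<or> e \<le> real j / 2 \<Longrightarrow> (\<lambda>\<beta>. c * Mo j \<beta>) \<in> O[at_top](\<lambda>\<beta>. \<beta> powr (- e))"
  by (cases "c = 0") (auto intro: cm_bigo Mo_e)

definition "Bnd \<beta> = (A2 * B3 * Mo 5 \<beta> + (A2 * B4 + A3 * B3) * Mo 6 \<beta> + (A3 * B4 + A4 * B3) * Mo 7 \<beta> + A4 * B4 * Mo 8 \<beta>)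
   + (A2 * Mo 2 \<beta> + A3 * Mo 3 \<beta> + A4 * Mo 4 \<beta>) * (B3 * Mo 3 \<beta> + B4 * Mo 4 \<beta>)"

lemma final_bound: assumes b: "\<beta> \<ge> 1" shows "\<bar>Vfun f \<beta> / 2 - Ifun f \<beta>\<bar> \<le> Bnd \<beta>"
proof -
  have Zp: "Z \<beta> > 0" using Z_pos[OF b] .
  have q1: "\<bar>Q \<beta> (\<lambda>x. U x * D x)\<bar> \<le> Q \<beta> psiUD"
    by (rule Q_abs_le[OF iUD[OF b] i_psiUD[OF b] psiUD_ge])
  have q2: "\<bar>Q \<beta> U\<bar> \<le> Q \<beta> psiU"
    by (rule Q_abs_le[OF iU[OF b] i_psiU[OF b] psiU_ge])
  have q3: "\<bar>Q \<beta> D\<bar> \<le> Q \<beta> psiD"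
    by (rule Q_abs_le[OF iD[OF b] i_psiD[OF b] psiD_ge])
  have "\<bar>Vfun f \<beta> / 2 - Ifun f \<beta>\<bar> = \<bar>Q \<beta> (\<lambda>x. U x * D x) / Z \<beta> - (Q \<beta> U / Z \<beta>) * (Q \<beta> D / Z \<beta>)\<bar>"
    unfolding main_identity[OF b] by (simp add: power2_eq_square)
  also have "\<dots> \<le> \<bar>Q \<beta> (\<lambda>x. U x * D x) / Z \<beta>\<bar> + \<bar>(Q \<beta> U / Z \<beta>) * (Q \<beta> D / Z \<beta>)\<bar>"
    by (rule abs_triangle_ineq4)
  also have "\<dots> = \<bar>Q \<beta> (\<lambda>x. U x * D x)\<bar> / Z \<beta> + (\<bar>Q \<beta> U\<bar> / Z \<beta>) * (\<bar>Q \<beta> D\<bar> / Z \<beta>)"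
    using Zp by (simp add: abs_mult abs_divide)
  also have "\<dots> \<le> Q \<beta> psiUD / Z \<beta> + (Q \<beta> psiU / Z \<beta>) * (Q \<beta> psiD / Z \<beta>)"
  proof (rule add_mono)
    show "\<bar>Q \<beta> (\<lambda>x. U x * D x)\<bar> / Z \<beta> \<le> Q \<beta> psiUD / Z \<beta>"
      using q1 Zp by (intro divide_right_mono) auto
    have a: "\<bar>Q \<beta> U\<bar> / Z \<beta> \<le> Q \<beta> psiU / Z \<beta>" using q2 Zp by (intro divide_right_mono) auto
    have c: "\<bar>Q \<beta> D\<bar> / Z \<beta> \<le> Q \<beta> psiD / Z \<beta>" using q3 Zp by (intro divide_right_mono) auto
    have a0: "0 \<le> \<bar>Q \<beta> D\<bar> / Z \<beta>" using Zp by simp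
    have c0: "0 \<le> Q \<beta> psiU / Z \<beta>" using a Zp by (smt (verit) abs_ge_zero divide_nonneg_pos)
    show "(\<bar>Q \<beta> U\<bar> / Z \<beta>) * (\<bar>Q \<beta> D\<bar> / Z \<beta>) \<le> (Q \<beta> psiU / Z \<beta>) * (Q \<beta> psiD / Z \<beta>)"
      by (rule mult_mono[OF a c c0 a0])
  qed
  also have "\<dots> = Bnd \<beta>"
  proof -
    have e1: "Q \<beta> psiUD / Z \<beta> = A2 * B3 * Mo 5 \<beta> + (A2 * B4 + A3 * B3) * Mo 6 \<beta> + (A3 * B4 + A4 * B3) * Mo 7 \<beta> + A4 * B4 * Mo 8 \<beta>"
      unfolding Q_psiUD[OF b] Mo_def by (simp add: add_divide_distrib)
    have e2: "Q \<beta> psiU / Z \<beta> = A2 * Mo 2 \<beta> + A3 * Mo 3 \<beta> + A4 * Mo 4 \<beta>"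
      unfolding Q_psiU[OF b] Mo_def by (simp add: add_divide_distrib)
    have e3: "Q \<beta> psiD / Z \<beta> = B3 * Mo 3 \<beta> + B4 * Mo 4 \<beta>"
      unfolding Q_psiD[OF b] Mo_def by (simp add: add_divide_distrib)
    show ?thesis unfolding e1 e2 e3 Bnd_def ..
  qed
  finally show ?thesis .
qed

lemma final_bigo: "(\<lambda>\<beta>. Vfun f \<beta> / 2 - Ifun f \<beta>) \<in> O[at_top](\<lambda>\<beta>. \<beta> powr (- (if H3 0 = 0 then 3 else 5/2)))"
proof -
  define e :: real where "e = (if H3 0 = 0 then 3 else 5/2)"
  have B3z: "B3 = 0 \<longleftrightarrow> H3 0 = 0" by (simp add: B3_def)
  have S1: "(\<lambda>\<beta>. A2 * B3 * Mo 5 \<beta> + (A2 * B4 + A3 * B3) * Mo 6 \<beta> + (A3 * B4 + A4 * B3) * Mo 7 \<beta> + A4 * B4 * Mo 8 \<beta>)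
      \<in> O[at_top](\<lambda>\<beta>. \<beta> powr (- e))"
    by (intro sum_in_bigo cMo_e) (auto simp: e_def B3z)
  have S2: "(\<lambda>\<beta>. A2 * Mo 2 \<beta> + A3 * Mo 3 \<beta> + A4 * Mo 4 \<beta>) \<in> O[at_top](\<lambda>\<beta>. \<beta> powr (- 1))"
    by (intro sum_in_bigo cMo_e) auto
  have S3: "(\<lambda>\<beta>. B3 * Mo 3 \<beta> + B4 * Mo 4 \<beta>) \<in> O[at_top](\<lambda>\<beta>. \<beta> powr (- (e - 1)))"
    by (intro sum_in_bigo cMo_e) (auto simp: e_def B3z)
  have "(\<lambda>\<beta>. (A2 * Mo 2 \<beta> + A3 * Mo 3 \<beta> + A4 * Mo 4 \<beta>) * (B3 * Mo 3 \<beta> + B4 * Mo 4 \<beta>))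
      \<in> O[at_top](\<lambda>\<beta>. \<beta> powr (- 1) * \<beta> powr (- (e - 1)))"
    by (rule landau_o.big.mult[OF S2 S3])
  moreover have "(\<lambda>\<beta>::real. \<beta> powr (- 1) * \<beta> powr (- (e - 1))) = (\<lambda>\<beta>. \<beta> powr (- e))"
  proof
    fix \<beta> :: real
    have "\<beta> powr (- 1) * \<beta> powr (- (e - 1)) = \<beta> powr (- 1 + - (e - 1))" by (rule powr_add[symmetric])
    also have "- 1 + - (e - 1) = - e" by simp
    finally show "\<beta> powr (- 1) * \<beta> powr (- (e - 1)) = \<beta> powr (- e)" .
  qed
  ultimately have S23: "(\<lambda>\<beta>. (A2 * Mo 2 \<beta> + A3 * Mo 3 \<beta> + A4 * Mo 4 \<beta>) * (B3 * Mo 3 \<beta> + B4 * Mo 4 \<beta>))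
      \<in> O[at_top](\<lambda>\<beta>. \<beta> powr (- e))" by simp
  have B: "Bnd \<in> O[at_top](\<lambda>\<beta>. \<beta> powr (- e))"
    unfolding Bnd_def[abs_def] by (rule sum_in_bigo(1)[OF S1 S23])
  have ev: "eventually (\<lambda>\<beta>. norm (Vfun f \<beta> / 2 - Ifun f \<beta>) \<le> 1 * norm (Bnd \<beta>)) at_top"
    using eventually_ge_at_top[of "1::real"]
  proof eventually_elim
    case (elim \<beta>)
    then show ?case using final_bound[OF elim] by simp
  qed
  have "(\<lambda>\<beta>. Vfun f \<beta> / 2 - Ifun f \<beta>) \<in> O[at_top](Bnd)"
    by (rule landau_o.bigI[OF zero_less_one ev])
  then show ?thesis using B landau_o.big_trans unfolding e_def by blast
qed

lemma final_k: "(\<lambda>\<beta>. Vfun f \<beta> / 2 - Ifun f \<beta>) \<in>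
   O[at_top](\<lambda>\<beta>. \<beta> powr (- (if H3 0 = 0 then min (2 + \<gamma>) 3 else min (2 + \<gamma>) (5/2))))"
proof -
  have m1: "min (2 + \<gamma>) 3 \<le> (3::real)" by (rule min.cobounded2)
  have m2: "min (2 + \<gamma>) (5/2) \<le> (5/2::real)" by (rule min.cobounded2)
  have "(if H3 0 = 0 then min (2 + \<gamma>) 3 else min (2 + \<gamma>) (5/2)) \<le> (if H3 0 = 0 then 3 else 5/2)"
    using m1 m2 by (simp only: split: if_split) blast
  from pw_bigo[OF this] final_bigo show ?thesis using landau_o.big_trans by blast
qed

end

lemma not_integrable_const: assumes "c \<noteq> (0::real)" shows "\<not> integrable lborel (\<lambda>_::real. c)"
proof
  assume "integrable lborel (\<lambda>_::real. c)"
  then have "(\<integral>\<^sup>+x. ennreal (norm c) \<partial>(lborel::real measure)) < \<infinity>"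
    by (simp add: integrable_iff_bounded)
  then show False using assms by (simp add: nn_integral_const ennreal_mult_less_top)
qed

lemma wvar_const_zero: assumes "c \<noteq> 0" shows "wvar (\<lambda>_. c) \<phi> = 0"
proof -
  have z: "(\<integral>(x::real). c \<partial>lborel) = 0"
    by (rule not_integrable_integral_eq[OF not_integrable_const[OF assms]])
  show ?thesis by (simp only: wvar_def wmean_def z) simp
qed

lemma const_not_bigo: assumes g: "(\<gamma>::real) > 0"
  shows "(\<lambda>_::real. 2::real) \<notin> O[at_top](\<lambda>\<beta>. \<beta> powr (- \<gamma>))"
proof
  assume A: "(\<lambda>_::real. 2::real) \<in> O[at_top](\<lambda>\<beta>. \<beta> powr (- \<gamma>))"
  have "(\<lambda>\<beta>::real. \<beta> powr (- \<gamma>)) \<in> o[at_top](\<lambda>_. 1)" using g by real_asymp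
  from landau_o.big_small_trans[OF A this] have "(\<lambda>_::real. 2::real) \<in> o[at_top](\<lambda>_. 1)" .
  from landau_o.smallD[OF this, of 1] have "eventually (\<lambda>_::real. (2::real) \<le> 1) at_top" by simp
  then show False by simp
qed

theorem lemma4:
  fixes f H :: "real \<Rightarrow> real" and M \<gamma> :: real
  assumes pos: "\<And>x. f x > 0"
    and C4_deriv: "\<And>n x. n < 4 \<Longrightarrow> ((deriv ^^ n) f has_real_derivative (deriv ^^ Suc n) f x) (at x)"
    and C4_cont: "continuous_on UNIV ((deriv ^^ 4) f)"
    and unimodal_left: "\<And>x y. x \<le> y \<Longrightarrow> y \<le> 0 \<Longrightarrow> f x \<le> f y"
    and unimodal_right: "\<And>x y. 0 \<le> x \<Longrightarrow> x \<le> y \<Longrightarrow> f y \<le> f x"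
    and fH: "\<And>x. f x = exp (- H x)"
    and regvar: "\<exists>\<alpha>>0. \<forall>x>0. ((\<lambda>t. H (t * x) / H t) \<longlongrightarrow> x powr \<alpha>) at_infinity"
    and Mpos: "M > 0"
    and h4_bound: "\<And>x. \<bar>(deriv ^^ 4) (hfun f) x\<bar> < M"
    and \<gamma>pos: "\<gamma> > 0"
    and var_hyp: "(\<lambda>\<beta>. \<bar>wvar (gdens f \<beta>) (\<lambda>y. y^2) - 2\<bar>) \<in> O[at_top](\<lambda>\<beta>. \<beta> powr (- \<gamma>))"
  shows "(\<lambda>\<beta>. Vfun f \<beta> / 2 - Ifun f \<beta>) \<in>
           O[at_top](\<lambda>\<beta>. \<beta> powr (- (if (deriv ^^ 3) (hfun f) 0 = 0
                                           then min (2 + \<gamma>) 3 else min (2 + \<gamma>) (5/2))))"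
proof -
  interpret L0 f M
    by unfold_locales (use pos C4_deriv h4_bound unimodal_left unimodal_right in auto)
  have aneg: "H2 0 < 0"
  proof -
    have "H2 0 \<noteq> 0"
    proof
      assume a0: "H2 0 = 0"
      have "gdens f \<beta> = (\<lambda>_. f 0 powr \<beta>)" for \<beta>
        using a0 hds(2) by (simp add: gdens_def)
      then have "wvar (gdens f \<beta>) (\<lambda>y. y^2) = 0" for \<beta>
        using pos[of 0] by (simp add: wvar_const_zero)
      then have "(\<lambda>_::real. 2::real) \<in> O[at_top](\<lambda>\<beta>. \<beta> powr (- \<gamma>))" using var_hyp by simp
      then show False using const_not_bigo[OF \<gamma>pos] by blast
    qed
    then show ?thesis using a_le0 by simp
  qed
  have contf: "continuous_on UNIV f"
    using df0 by (intro continuous_at_imp_continuous_on) (auto intro: DERIV_isCont)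
  have tl: "integrable lborel (\<lambda>x. \<bar>x\<bar>^m * f x)" for m
    by (rule tail_integrable[OF pos contf unimodal_left unimodal_right fH regvar])
  interpret L1 f M
    by unfold_locales (use aneg tl in auto)
  show ?thesis using final_k[of \<gamma>] hds(3) by simp
qed

end
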